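(* Let $0\to E\to F\to G\to 0$ be an exact sequence of vector bundles on $\mathbb{P}^1$ with $E$ balanced and $G$ $2$-balanced. (1) If $\mu(E)\le\mu(F)$, then either $F$ is $2$-balanced or every summand of $G$ has degree at least $\lfloor\mu(E)\rfloor$. (2) If $\mu(F)\le\mu(E)$, then either $F$ is $2$-balanced or every summand of $G$ has degree at most $\lceil\mu(E)\rceil$.
   Context: For a vector bundle $W$ on $\mathbb{P}^1$, $\mu(W)=\deg(W)/\operatorname{rank}(W)$. Writing $W\cong\bigoplus_{i=1}^r\mathcal{O}(a_i)$ with $a_1\ge\dots\ge a_r$, $W$ is $j$-balanced if $a_1-a_r\le j$; balanced means $1$-balanced. *)

theory Defs
  imports Complex_Main
begin

text \<open>A vector bundle on P^1 (over the complex numbers) is, by Grothendieck's theorem,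
  isomorphic to a direct sum of line bundles O(a_1) + ... + O(a_r); we represent it by the
  list of the a_i.  rank = length, degree = sum.\<close>

definition rk :: "int list \<Rightarrow> nat" where "rk W = length W"
definition dg :: "int list \<Rightarrow> int" where "dg W = sum_list W"
definition mu :: "int list \<Rightarrow> real" where "mu W = real_of_int (dg W) / real (rk W)"

definition balanced_by :: "nat \<Rightarrow> int list \<Rightarrow> bool" where
  "balanced_by j W \<longleftrightarrow> W = [] \<or> Max (set W) - Min (set W) \<le> int j"

text \<open>A section of O(d) = homogeneous polynomial of degree d in x,y, given by coefficients
  c k of x^k y^(d-k), k \<le> d; it is 0 if d < 0.  Evaluation at (x,y).\<close>
definition hpoly_eval :: "int \<Rightarrow> (nat \<Rightarrow> complex) \<Rightarrow> complex \<Rightarrow> complex \<Rightarrow> complex" where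
  "hpoly_eval d c x y =
     (if d < 0 then 0 else (\<Sum>k\<le>nat d. c k * x ^ k * y ^ (nat d - k)))"

text \<open>A bundle map from O(A) to O(B) is a matrix phi j i in Hom(O(A!i), O(B!j)) = H^0(O(B!j - A!i)).
  Its value on the fibre over the point [x:y] (with respect to the standard trivialisations
  of the O(a) over the lifted point (x,y)).\<close>
definition fibre :: "int list \<Rightarrow> (nat \<Rightarrow> complex) set" where
  "fibre A = {v. \<forall>i\<ge>length A. v i = 0}"

definition map_at :: "int list \<Rightarrow> int list \<Rightarrow> (nat \<Rightarrow> nat \<Rightarrow> nat \<Rightarrow> complex)
     \<Rightarrow> complex \<Rightarrow> complex \<Rightarrow> (nat \<Rightarrow> complex) \<Rightarrow> (nat \<Rightarrow> complex)" where
  "map_at A B phi x y v =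
     (\<lambda>j. if j < length B then (\<Sum>i<length A. hpoly_eval (B!j - A!i) (phi j i) x y * v i) else 0)"

text \<open>0 \<rightarrow> E \<rightarrow> F \<rightarrow> G \<rightarrow> 0 is an exact sequence of vector bundles: since all terms are
  locally free, this is equivalent to exactness on every fibre.\<close>
definition short_exact ::
  "int list \<Rightarrow> int list \<Rightarrow> int list \<Rightarrow> (nat \<Rightarrow> nat \<Rightarrow> nat \<Rightarrow> complex)
     \<Rightarrow> (nat \<Rightarrow> nat \<Rightarrow> nat \<Rightarrow> complex) \<Rightarrow> bool" where
  "short_exact E F G alpha beta \<longleftrightarrow>
     (\<forall>x y. (x, y) \<noteq> (0, 0) \<longrightarrow>
        inj_on (map_at E F alpha x y) (fibre E) \<and>
        map_at F G beta x y ` fibre F = fibre G \<and>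
        map_at E F alpha x y ` fibre E = {w \<in> fibre F. map_at F G beta x y w = (\<lambda>_. 0)})"

end

theory Submission
  imports Defs "Jordan_Normal_Form.Determinant" "HOL-Complex_Analysis.Complex_Analysis"
begin

hide_type (open) Finite_Cartesian_Product.vec
hide_const (open) Finite_Cartesian_Product.vec Finite_Cartesian_Product.mat Finite_Cartesian_Product.row  Finite_Cartesian_Product.transpose Determinants.det

lemma zero_row_det:
  fixes A :: "complex mat"
  assumes A: "A \<in> carrier_mat k k" and i: "i < k" and z: "\<And>j. j < k \<Longrightarrow> A $$ (i,j) = 0"
  shows "det A = 0"
proof -
  have h: "\<And>p. p permutes {0..<k} \<Longrightarrow> (\<Prod>i = 0..<k. A $$ (i, p i)) = 0"
  proof -
    fix p assume p: "p permutes {0..<k}"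
    have "p i < k" using permutes_in_image[OF p] i by auto
    then show "(\<Prod>i = 0..<k. A $$ (i, p i)) = 0"
      using i z by (intro prod_zero bexI[of _ i]) auto
  qed
  have d: "dim_row A = k" "dim_col A = k" using A by auto
  show ?thesis unfolding Determinant.det_def d
    by (simp, rule sum.neutral, use h in simp)
qed

lemma mult_zero_vec[simp]:
  fixes A :: "complex mat"
  assumes "A \<in> carrier_mat R K"
  shows "A *\<^sub>v 0\<^sub>v K = 0\<^sub>v R"
  using assms by (intro eq_vecI) auto

lemma inj_le:
  fixes A :: "complex mat"
  assumes A: "A \<in> carrier_mat R K"
    and inj: "\<And>v. v \<in> carrier_vec K \<Longrightarrow> A *\<^sub>v v = 0\<^sub>v R \<Longrightarrow> v = 0\<^sub>v K"
  shows "K \<le> R"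
proof (rule ccontr)
  assume "\<not> K \<le> R"
  define A' where "A' = mat K K (\<lambda>(i,j). if i < R then A $$ (i,j) else 0)"
  have A': "A' \<in> carrier_mat K K" by (simp add: A'_def)
  have "det A' = 0" by (rule zero_row_det[OF A', of "K - 1"]) (use \<open>\<not> K \<le> R\<close> in \<open>auto simp: A'_def\<close>)
  then obtain v where v: "v \<in> carrier_vec K" "v \<noteq> 0\<^sub>v K" "A' *\<^sub>v v = 0\<^sub>v K"
    using det_0_iff_vec_prod_zero_field[OF A'] by auto
  have "A *\<^sub>v v = 0\<^sub>v R"
  proof (rule eq_vecI)
    fix i assume "i < dim_vec (0\<^sub>v R :: complex vec)"
    then have i: "i < R" by simp
    have "row A i = row A' i" using A i \<open>\<not> K \<le> R\<close> by (intro eq_vecI) (auto simp: A'_def)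
    then have "(A *\<^sub>v v) $ i = (A' *\<^sub>v v) $ i" using A A' i \<open>\<not> K \<le> R\<close> by auto
    then show "(A *\<^sub>v v) $ i = 0\<^sub>v R $ i" using v i \<open>\<not> K \<le> R\<close> by auto
  qed (use A in auto)
  with inj v show False by auto
qed

lemma surj_le:
  fixes A :: "complex mat"
  assumes A: "A \<in> carrier_mat R K"
    and surj: "\<And>z. z \<in> carrier_vec R \<Longrightarrow> \<exists>v\<in>carrier_vec K. A *\<^sub>v v = z"
  shows "R \<le> K"
proof -
  define pre where "pre k = (SOME v. v \<in> carrier_vec K \<and> A *\<^sub>v v = unit_vec R k)" for k
  have pre: "pre k \<in> carrier_vec K \<and> A *\<^sub>v pre k = unit_vec R k" for k
    unfolding pre_def by (rule someI_ex) (use surj[of "unit_vec R k"] in auto)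
  define N where "N = mat K R (\<lambda>(i,k). pre k $ i)"
  have N: "N \<in> carrier_mat K R" by (simp add: N_def)
  have AN: "A * N = 1\<^sub>m R"
  proof (rule eq_matI)
    fix l k assume l: "l < dim_row (1\<^sub>m R :: complex mat)" and k: "k < dim_col (1\<^sub>m R :: complex mat)"
    have cN: "col N k = pre k" using pre[of k] k by (auto simp: N_def col_mat)
    have "(A * N) $$ (l, k) = row A l \<bullet> col N k" using A N l k by auto
    also have "\<dots> = (A *\<^sub>v pre k) $ l" using cN A l by auto
    also have "\<dots> = 1\<^sub>m R $$ (l, k)" using pre[of k] l k by auto
    finally show "(A * N) $$ (l, k) = 1\<^sub>m R $$ (l, k)" .
  qed (use A N in auto)
  have "R \<le> K"
  proof (rule inj_le[OF N])
    fix w assume w: "w \<in> carrier_vec R" and Nw: "N *\<^sub>v w = 0\<^sub>v K"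
    have "w = (A * N) *\<^sub>v w" using AN w by simp
    also have "\<dots> = A *\<^sub>v (N *\<^sub>v w)" using A N w by (simp add: assoc_mult_mat_vec)
    also have "\<dots> = 0\<^sub>v R" using Nw A by simp
    finally show "w = 0\<^sub>v R" .
  qed
  then show ?thesis .
qed

definition hcat :: "complex mat \<Rightarrow> complex mat \<Rightarrow> complex mat" where
  "hcat A C = four_block_mat A C (0\<^sub>m 0 (dim_col A)) (0\<^sub>m 0 (dim_col C))"

lemma hcat_carrier:
  assumes A: "A \<in> carrier_mat m n" and C: "C \<in> carrier_mat m r"
  shows "hcat A C \<in> carrier_mat m (n+r)"
proof -
  have "dim_col C = r" using C by simp
  then show ?thesis unfolding hcat_def using four_block_carrier_mat[OF A zero_carrier_mat[of 0 r]] by simp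
qed

lemma hcat_index: "A \<in> carrier_mat m n \<Longrightarrow> C \<in> carrier_mat m r \<Longrightarrow> j < m \<Longrightarrow> i < n + r \<Longrightarrow>
   hcat A C $$ (j,i) = (if i < n then A $$ (j,i) else C $$ (j, i - n))"
proof -
  assume A: "A \<in> carrier_mat m n" and C: "C \<in> carrier_mat m r" and j: "j < m" and i: "i < n + r"
  have d: "dim_row A = m" "dim_col A = n" "dim_col C = r" "dim_row (0\<^sub>m 0 r :: complex mat) = 0"
    "dim_col (0\<^sub>m 0 r :: complex mat) = r" using A C by auto
  show ?thesis unfolding hcat_def d using index_mat_four_block(1)[of j A "0\<^sub>m 0 r" i C "0\<^sub>m 0 n"] d i j
    by simp
qed

lemma append_vec_0: "dim_vec w = 0 \<Longrightarrow> v @\<^sub>v w = v"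
  by (intro eq_vecI) auto

lemma vec_diff_add: "(x :: complex vec) \<in> carrier_vec k \<Longrightarrow> y \<in> carrier_vec k \<Longrightarrow> (y - x) + x = y"
  by (intro eq_vecI) auto

lemma hcat_mult_vec:
  assumes A: "A \<in> carrier_mat m n" and C: "C \<in> carrier_mat m r"
    and a: "a \<in> carrier_vec n" and c: "c \<in> carrier_vec r"
  shows "hcat A C *\<^sub>v (a @\<^sub>v c) = A *\<^sub>v a + C *\<^sub>v c"
proof -
  have "hcat A C *\<^sub>v (a @\<^sub>v c) = (A *\<^sub>v a + C *\<^sub>v c) @\<^sub>v (0\<^sub>m 0 n *\<^sub>v a + 0\<^sub>m 0 r *\<^sub>v c)"
    unfolding hcat_def using A C a c
    by (simp add: four_block_mat_mult_vec[of A m n C r "0\<^sub>m 0 n" 0 "0\<^sub>m 0 r"])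
  also have "\<dots> = A *\<^sub>v a + C *\<^sub>v c" by (rule append_vec_0) simp
  finally show ?thesis .
qed

lemma hcat_mult:
  assumes A: "A \<in> carrier_mat m n" and C: "C \<in> carrier_mat m r"
    and K: "K \<in> carrier_mat n r" and X: "X \<in> carrier_mat r r"
  shows "hcat A C * four_block_mat (1\<^sub>m n) K (0\<^sub>m r n) X = hcat A (A * K + C * X)"
proof -
  have "hcat A C * four_block_mat (1\<^sub>m n) K (0\<^sub>m r n) X =
     four_block_mat (A * 1\<^sub>m n + C * 0\<^sub>m r n) (A * K + C * X) (0\<^sub>m 0 n * 1\<^sub>m n + 0\<^sub>m 0 r * 0\<^sub>m r n)
       (0\<^sub>m 0 n * K + 0\<^sub>m 0 r * X)"
    unfolding hcat_def using A C K X
    by (simp add: mult_four_block_mat[of A m n C r "0\<^sub>m 0 n" 0 "0\<^sub>m 0 r" "1\<^sub>m n" n K r "0\<^sub>m r n" X])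
  also have "\<dots> = hcat A (A * K + C * X)"
  proof -
    have e1: "A * 1\<^sub>m n + C * 0\<^sub>m r n = A" using A C by simp
    have e2: "0\<^sub>m 0 n * 1\<^sub>m n + 0\<^sub>m 0 r * 0\<^sub>m r n = (0\<^sub>m 0 n :: complex mat)" by (rule eq_matI) auto
    have e3: "0\<^sub>m 0 n * K + 0\<^sub>m 0 r * X = (0\<^sub>m 0 r :: complex mat)" using K X by (intro eq_matI) auto
    have e4: "dim_col (A * K + C * X) = r" "dim_col A = n" using A K X by auto
    show ?thesis by (simp only: hcat_def e1 e2 e3 e4)
  qed
  finally show ?thesis .
qed

locale xt =
  fixes A B :: "complex mat" and n m r :: nat
  assumes A: "A \<in> carrier_mat m n" and B: "B \<in> carrier_mat r m"
    and inj: "\<And>v. v \<in> carrier_vec n \<Longrightarrow> A *\<^sub>v v = 0\<^sub>v m \<Longrightarrow> v = 0\<^sub>v n"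
    and surj: "\<And>z. z \<in> carrier_vec r \<Longrightarrow> \<exists>w\<in>carrier_vec m. B *\<^sub>v w = z"
    and exact: "\<And>w. w \<in> carrier_vec m \<Longrightarrow> B *\<^sub>v w = 0\<^sub>v r \<Longrightarrow> \<exists>v\<in>carrier_vec n. A *\<^sub>v v = w"
    and comp: "\<And>v. v \<in> carrier_vec n \<Longrightarrow> B *\<^sub>v (A *\<^sub>v v) = 0\<^sub>v r"
begin

lemma ex_C: "\<exists>C\<in>carrier_mat m r. B * C = 1\<^sub>m r"
proof -
  define pre where "pre k = (SOME v. v \<in> carrier_vec m \<and> B *\<^sub>v v = unit_vec r k)" for k
  have pre: "pre k \<in> carrier_vec m \<and> B *\<^sub>v pre k = unit_vec r k" for k
    unfolding pre_def by (rule someI_ex) (use surj[of "unit_vec r k"] in auto)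
  define N where "N = mat m r (\<lambda>(i,k). pre k $ i)"
  have N: "N \<in> carrier_mat m r" by (simp add: N_def)
  have "B * N = 1\<^sub>m r"
  proof (rule eq_matI)
    fix l k assume l: "l < dim_row (1\<^sub>m r :: complex mat)" and k: "k < dim_col (1\<^sub>m r :: complex mat)"
    have cN: "col N k = pre k" using pre[of k] k by (auto simp: N_def col_mat)
    have "(B * N) $$ (l, k) = row B l \<bullet> col N k" using B N l k by auto
    also have "\<dots> = (B *\<^sub>v pre k) $ l" using cN B l by auto
    also have "\<dots> = 1\<^sub>m r $$ (l, k)" using pre[of k] l k by auto
    finally show "(B * N) $$ (l, k) = 1\<^sub>m r $$ (l, k)" .
  qed (use B N in auto)
  with N show ?thesis by auto
qed

lemma hcat_inj:
  assumes C: "C \<in> carrier_mat m r" and BC: "B * C = 1\<^sub>m r"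
    and v: "v \<in> carrier_vec (n+r)" and Mv: "hcat A C *\<^sub>v v = 0\<^sub>v m"
  shows "v = 0\<^sub>v (n+r)"
proof -
  define a where "a = vec_first v n"
  define c where "c = vec_last v r"
  have a: "a \<in> carrier_vec n" and c: "c \<in> carrier_vec r" by (auto simp: a_def c_def)
  have v': "v = a @\<^sub>v c" using v by (simp add: a_def c_def)
  have 1: "A *\<^sub>v a + C *\<^sub>v c = 0\<^sub>v m" using Mv hcat_mult_vec[OF A C a c] v' by simp
  have "B *\<^sub>v (A *\<^sub>v a + C *\<^sub>v c) = B *\<^sub>v (A *\<^sub>v a) + B *\<^sub>v (C *\<^sub>v c)"
    using A B C a c by (intro mult_add_distrib_mat_vec) auto
  also have "\<dots> = c" using comp[OF a] BC c A B C
    by (simp add: assoc_mult_mat_vec[symmetric])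
  finally have c0: "c = 0\<^sub>v r" using 1 B by simp
  then have "A *\<^sub>v a = 0\<^sub>v m" using 1 A C a by simp
  then have a0: "a = 0\<^sub>v n" using inj a by simp
  have "v = 0\<^sub>v n @\<^sub>v 0\<^sub>v r" using v' c0 a0 by simp
  also have "\<dots> = 0\<^sub>v (n+r)" by (rule eq_vecI) auto
  finally show ?thesis .
qed

lemma hcat_surj:
  assumes C: "C \<in> carrier_mat m r" and BC: "B * C = 1\<^sub>m r"
    and y: "y \<in> carrier_vec m"
  shows "\<exists>v\<in>carrier_vec (n+r). hcat A C *\<^sub>v v = y"
proof -
  define d where "d = y - C *\<^sub>v (B *\<^sub>v y)"
  have d: "d \<in> carrier_vec m" using C B y by (simp add: d_def)
  have "B *\<^sub>v d = B *\<^sub>v y - B *\<^sub>v (C *\<^sub>v (B *\<^sub>v y))"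
    unfolding d_def using B C y by (intro mult_minus_distrib_mat_vec) auto
  also have "B *\<^sub>v (C *\<^sub>v (B *\<^sub>v y)) = (B * C) *\<^sub>v (B *\<^sub>v y)"
    using B C y by (intro assoc_mult_mat_vec[symmetric]) auto
  also have "\<dots> = B *\<^sub>v y" unfolding BC using B y by (intro one_mult_mat_vec) auto
  also have "B *\<^sub>v y - B *\<^sub>v y = 0\<^sub>v r" using B y by (intro eq_vecI) auto
  finally have "B *\<^sub>v d = 0\<^sub>v r" .
  then obtain a where a: "a \<in> carrier_vec n" "A *\<^sub>v a = d" using exact d by auto
  have "hcat A C *\<^sub>v (a @\<^sub>v (B *\<^sub>v y)) = A *\<^sub>v a + C *\<^sub>v (B *\<^sub>v y)"
    using hcat_mult_vec[OF A C a(1), of "B *\<^sub>v y"] B y by simp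
  also have "\<dots> = y" unfolding a(2) d_def using C B y by (intro vec_diff_add) auto
  finally have 1: "hcat A C *\<^sub>v (a @\<^sub>v (B *\<^sub>v y)) = y" .
  have 2: "a @\<^sub>v (B *\<^sub>v y) \<in> carrier_vec (n+r)" using a B y by auto
  show ?thesis using 1 2 by (rule bexI[where x = "a @\<^sub>v (B *\<^sub>v y)"])
qed

lemma dim: "m = n + r"
proof -
  obtain C where C: "C \<in> carrier_mat m r" "B * C = 1\<^sub>m r" using ex_C by auto
  have "n + r \<le> m" by (rule inj_le[OF hcat_carrier[OF A C(1)] hcat_inj[OF C]])
  moreover have "m \<le> n + r" by (rule surj_le[OF hcat_carrier[OF A C(1)] hcat_surj[OF C]])
  ultimately show ?thesis by simp
qed

lemma det_ne:
  assumes C: "C \<in> carrier_mat m r" and BC: "B * C = 1\<^sub>m r"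
  shows "det (hcat A C) \<noteq> 0"
proof
  assume "det (hcat A C) = 0"
  moreover have M: "hcat A C \<in> carrier_mat (n+r) (n+r)" using hcat_carrier[OF A C] dim by simp
  ultimately obtain v where v: "v \<in> carrier_vec (n+r)" "v \<noteq> 0\<^sub>v (n+r)" "hcat A C *\<^sub>v v = 0\<^sub>v (n+r)"
    using det_0_iff_vec_prod_zero_field[OF M] by auto
  have "hcat A C *\<^sub>v v = 0\<^sub>v m" using v(3) dim by simp
  from hcat_inj[OF C BC v(1) this] v(2) show False by simp
qed

lemma indep:
  assumes C: "C \<in> carrier_mat m r" and BC: "B * C = 1\<^sub>m r" and C': "C' \<in> carrier_mat m r"
  shows "det (hcat A C') = det (hcat A C) * det (B * C')"
proof -
  define X where "X = B * C'"
  have X: "X \<in> carrier_mat r r" using B C' by (simp add: X_def)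
  define D where "D = C' - C * X"
  have D: "D \<in> carrier_mat m r" unfolding D_def using C X by (intro minus_carrier_mat mult_carrier_mat)
  have BD: "B * D = 0\<^sub>m r r"
  proof -
    have "B * D = B * C' - B * (C * X)" unfolding D_def using B C' C X by (intro mult_minus_distrib_mat) auto
    also have "B * (C * X) = (B * C) * X" using B C X by (intro assoc_mult_mat[symmetric]) auto
    also have "\<dots> = X" unfolding BC using X by simp
    also have "B * C' - X = 0\<^sub>m r r" unfolding X_def using B C' by (intro minus_r_inv_mat) auto
    finally show ?thesis .
  qed
  define k where "k l = (SOME v. v \<in> carrier_vec n \<and> A *\<^sub>v v = col D l)" for l
  have k: "k l \<in> carrier_vec n \<and> A *\<^sub>v k l = col D l" if l: "l < r" for l
  proof -
    have "B *\<^sub>v col D l = col (B * D) l" using B D l by (intro col_mult2[symmetric]) auto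
    also have "\<dots> = 0\<^sub>v r" unfolding BD using l by (intro eq_vecI) auto
    finally have BcD: "B *\<^sub>v col D l = 0\<^sub>v r" .
    have cD: "col D l \<in> carrier_vec m" using D unfolding carrier_vec_def carrier_mat_def by simp
    from exact[OF cD BcD] obtain v where "v \<in> carrier_vec n \<and> A *\<^sub>v v = col D l" by blast
    then show ?thesis unfolding k_def by (rule someI)
  qed
  define K where "K = mat n r (\<lambda>(i,l). k l $ i)"
  have K: "K \<in> carrier_mat n r" by (simp add: K_def)
  have AK: "A * K = D"
  proof (rule eq_matI)
    fix j l assume j: "j < dim_row D" and l: "l < dim_col D"
    have l': "l < r" and j': "j < m" using l j D by auto
    have cK: "col K l = k l" using k[OF l'] l' by (auto simp: K_def col_mat)
    have "(A * K) $$ (j, l) = row A j \<bullet> col K l" using A K j' l' by simp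
    also have "\<dots> = (A *\<^sub>v k l) $ j" using cK A j' by simp
    also have "\<dots> = D $$ (j, l)" using k[OF l'] j' l' D by simp
    finally show "(A * K) $$ (j, l) = D $$ (j, l)" .
  qed (use A K D in auto)
  have C'eq: "A * K + C * X = C'"
  proof (rule eq_matI)
    fix j l assume "j < dim_row C'" "l < dim_col C'"
    then show "(A * K + C * X) $$ (j, l) = C' $$ (j, l)"
      unfolding AK D_def using C C' X by simp
  qed (use A K C X C' in auto)
  define T where "T = four_block_mat (1\<^sub>m n) K (0\<^sub>m r n) X"
  have T: "T \<in> carrier_mat (n+r) (n+r)" unfolding T_def by (rule four_block_carrier_mat[OF one_carrier_mat X])
  have detT: "det T = det X" unfolding T_def
    using det_four_block_mat_lower_left_zero[OF one_carrier_mat K refl X] by simp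
  have "hcat A C * T = hcat A C'" unfolding T_def hcat_mult[OF A C K X] C'eq ..
  then have "det (hcat A C') = det (hcat A C * T)" by simp
  also have "\<dots> = det (hcat A C) * det T"
    using hcat_carrier[OF A C] T dim by (intro det_mult) auto
  finally show ?thesis unfolding detT X_def .
qed

lemma v_unique:
  assumes v: "v \<in> carrier_vec n" and v': "v' \<in> carrier_vec n" and eq: "A *\<^sub>v v = A *\<^sub>v v'"
  shows "v = v'"
proof -
  have "A *\<^sub>v (v - v') = A *\<^sub>v v - A *\<^sub>v v'" using A v v' by (intro mult_minus_distrib_mat_vec) auto
  also have "\<dots> = 0\<^sub>v m" unfolding eq using A v' by (intro eq_vecI) auto
  finally have h: "v - v' = 0\<^sub>v n" using v v' by (intro inj) auto
  show ?thesis
  proof (rule eq_vecI)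
    fix i assume i: "i < dim_vec v'"
    then have "(v - v') $ i = 0" using h v' by simp
    then show "v $ i = v' $ i" using v v' i by simp
  qed (use v v' in simp)
qed

lemma u_unique:
  assumes u: "u \<in> carrier_vec r" and u': "u' \<in> carrier_vec r" and eq: "B\<^sup>T *\<^sub>v u = B\<^sup>T *\<^sub>v u'"
  shows "u = u'"
proof -
  define d where "d = u - u'"
  have d: "d \<in> carrier_vec r" using u u' by (simp add: d_def)
  have "B\<^sup>T *\<^sub>v d = B\<^sup>T *\<^sub>v u - B\<^sup>T *\<^sub>v u'" unfolding d_def using B u u'
    by (intro mult_minus_distrib_mat_vec[of _ m r]) auto
  also have "\<dots> = 0\<^sub>v m" unfolding eq using B u' by (intro eq_vecI) auto
  finally have Bd: "B\<^sup>T *\<^sub>v d = 0\<^sub>v m" .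
  have "d $ k = 0" if k: "k < r" for k
  proof -
    obtain w where w: "w \<in> carrier_vec m" "B *\<^sub>v w = unit_vec r k" using surj[of "unit_vec r k"] by auto
    have "d $ k = d \<bullet> unit_vec r k" using d k by simp
    also have "\<dots> = (B\<^sup>T *\<^sub>v d) \<bullet> w" unfolding w(2)[symmetric]
      using transpose_vec_mult_scalar[OF B w(1) d] by simp
    also have "\<dots> = 0" unfolding Bd using w(1) by simp
    finally show ?thesis .
  qed
  show ?thesis
  proof (rule eq_vecI)
    fix i assume i: "i < dim_vec u'"
    then have "d $ i = 0" using \<open>\<And>k. k < r \<Longrightarrow> d $ k = 0\<close> u' by simp
    then show "u $ i = u' $ i" using u u' i unfolding d_def by simp
  qed (use u u' in simp)
qed

lemma u_exists:
  assumes z: "z \<in> carrier_vec m" and zA: "\<And>a. a \<in> carrier_vec n \<Longrightarrow> z \<bullet> (A *\<^sub>v a) = 0"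
  shows "\<exists>u\<in>carrier_vec r. B\<^sup>T *\<^sub>v u = z"
proof -
  obtain C where C: "C \<in> carrier_mat m r" "B * C = 1\<^sub>m r" using ex_C by auto
  define u where "u = C\<^sup>T *\<^sub>v z"
  have u: "u \<in> carrier_vec r" using C z by (simp add: u_def)
  have key: "(B\<^sup>T *\<^sub>v u) \<bullet> y = z \<bullet> y" if y: "y \<in> carrier_vec m" for y
  proof -
    obtain v where v: "v \<in> carrier_vec (n+r)" "hcat A C *\<^sub>v v = y" using hcat_surj[OF C y] by auto
    define a where "a = vec_first v n"
    define c where "c = vec_last v r"
    have a: "a \<in> carrier_vec n" and c: "c \<in> carrier_vec r" by (auto simp: a_def c_def)
    have v': "v = a @\<^sub>v c" using v by (simp add: a_def c_def)
    have yy: "y = A *\<^sub>v a + C *\<^sub>v c" using v(2) hcat_mult_vec[OF A C(1) a c] v' by simp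
    have By: "B *\<^sub>v y = c"
    proof -
      have "B *\<^sub>v y = B *\<^sub>v (A *\<^sub>v a) + B *\<^sub>v (C *\<^sub>v c)" unfolding yy
        using A B C a c by (intro mult_add_distrib_mat_vec) auto
      also have "B *\<^sub>v (C *\<^sub>v c) = (B * C) *\<^sub>v c" using B C c by (intro assoc_mult_mat_vec[symmetric]) auto
      also have "\<dots> = c" unfolding C(2) using c by simp
      finally show ?thesis using comp[OF a] c by simp
    qed
    have "(B\<^sup>T *\<^sub>v u) \<bullet> y = u \<bullet> (B *\<^sub>v y)" using transpose_vec_mult_scalar[OF B y u] .
    also have "\<dots> = z \<bullet> (C *\<^sub>v c)" unfolding By u_def using transpose_vec_mult_scalar[OF C(1) c z] .
    also have "\<dots> = z \<bullet> (A *\<^sub>v a) + z \<bullet> (C *\<^sub>v c)" using zA[OF a] by simp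
    also have "\<dots> = z \<bullet> y" unfolding yy using z A C a c by (intro scalar_prod_add_distrib[symmetric]) auto
    finally show ?thesis .
  qed
  have "B\<^sup>T *\<^sub>v u = z"
  proof (rule eq_vecI)
    fix i assume "i < dim_vec z"
    then have i: "i < m" using z by simp
    have "(B\<^sup>T *\<^sub>v u) $ i = (B\<^sup>T *\<^sub>v u) \<bullet> unit_vec m i" using i by simp
    also have "\<dots> = z \<bullet> unit_vec m i" by (rule key) simp
    also have "\<dots> = z $ i" using i by simp
    finally show "(B\<^sup>T *\<^sub>v u) $ i = z $ i" .
  qed (use B z in simp)
  with u show ?thesis by auto
qed

end

definition tf :: "nat \<Rightarrow> complex vec \<Rightarrow> nat \<Rightarrow> complex" where
  "tf k w = (\<lambda>i. if i < k then w $ i else 0)"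

lemma tf_fibre: "tf (length P) w \<in> fibre P"
  by (simp add: tf_def fibre_def)

lemma fibre_tf: "v \<in> fibre P \<Longrightarrow> v = tf (length P) (vec (length P) v)"
  by (rule ext) (auto simp: tf_def fibre_def)

lemma tf_inj: assumes "a \<in> carrier_vec k" "b \<in> carrier_vec k" "tf k a = tf k b" shows "a = b"
proof (rule eq_vecI)
  fix i assume "i < dim_vec b"
  then have "i < k" using assms by simp
  then show "a $ i = b $ i" using fun_cong[OF assms(3), of i] by (simp add: tf_def)
qed (use assms in simp)

lemma tf_zero: "tf k (0\<^sub>v k) = (\<lambda>_. 0)"
  by (rule ext) (simp add: tf_def)

definition AMat :: "int list \<Rightarrow> int list \<Rightarrow> (nat \<Rightarrow> nat \<Rightarrow> nat \<Rightarrow> complex) \<Rightarrow> complex \<Rightarrow> complex \<Rightarrow> complex mat" where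
  "AMat P Q phi x y = mat (length Q) (length P) (\<lambda>(j,i). hpoly_eval (Q!j - P!i) (phi j i) x y)"

lemma AMat_carrier[simp]: "AMat P Q phi x y \<in> carrier_mat (length Q) (length P)"
  by (simp add: AMat_def)

lemma AMat_dims[simp]: "dim_row (AMat P Q phi x y) = length Q" "dim_col (AMat P Q phi x y) = length P"
  by (simp_all add: AMat_def)

lemma AMat_index: "j < length Q \<Longrightarrow> i < length P \<Longrightarrow> AMat P Q phi x y $$ (j,i) = hpoly_eval (Q!j - P!i) (phi j i) x y"
  by (simp add: AMat_def)

lemma map_at_tf:
  assumes u: "u \<in> carrier_vec (length P)"
  shows "map_at P Q phi x y (tf (length P) u) = tf (length Q) (AMat P Q phi x y *\<^sub>v u)"
proof (rule ext)
  fix j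
  show "map_at P Q phi x y (tf (length P) u) j = tf (length Q) (AMat P Q phi x y *\<^sub>v u) j"
  proof (cases "j < length Q")
    case True
    have "(AMat P Q phi x y *\<^sub>v u) $ j = row (AMat P Q phi x y) j \<bullet> u" using True by simp
    also have "\<dots> = (\<Sum>i\<in>{0..<length P}. row (AMat P Q phi x y) j $ i * u $ i)"
      unfolding scalar_prod_def using u by simp
    also have "\<dots> = (\<Sum>i<length P. hpoly_eval (Q!j - P!i) (phi j i) x y * tf (length P) u i)"
      using True by (simp add: atLeast0LessThan tf_def AMat_def)
    finally show ?thesis using True by (simp add: map_at_def tf_def)
  qed (simp add: map_at_def tf_def)
qed

lemma xt_at:
  assumes ex: "short_exact E F G alpha beta" and p: "(x,y) \<noteq> (0,0)"
  shows "xt (AMat E F alpha x y) (AMat F G beta x y) (length E) (length F) (length G)"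
proof -
  let ?A = "AMat E F alpha x y" and ?B = "AMat F G beta x y"
  let ?n = "length E" and ?m = "length F" and ?r = "length G"
  have I: "inj_on (map_at E F alpha x y) (fibre E)"
    and S: "map_at F G beta x y ` fibre F = fibre G"
    and X: "map_at E F alpha x y ` fibre E = {w \<in> fibre F. map_at F G beta x y w = (\<lambda>_. 0)}"
    using ex p unfolding short_exact_def by blast+
  show ?thesis
  proof (unfold_locales)
    show "?A \<in> carrier_mat ?m ?n" by simp
    show "?B \<in> carrier_mat ?r ?m" by simp
  next
    fix v assume v: "v \<in> carrier_vec ?n" and Av: "?A *\<^sub>v v = 0\<^sub>v ?m"
    have "map_at E F alpha x y (tf ?n v) = map_at E F alpha x y (tf ?n (0\<^sub>v ?n))"
      using map_at_tf[OF v] map_at_tf[of "0\<^sub>v ?n" E F alpha x y] Av mult_zero_vec[OF AMat_carrier[of E F alpha x y]] by simp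
    then have "tf ?n v = tf ?n (0\<^sub>v ?n)" using I tf_fibre by (meson inj_onD)
    then show "v = 0\<^sub>v ?n" using v by (intro tf_inj) auto
  next
    fix z :: "complex vec" assume z: "z \<in> carrier_vec ?r"
    have "tf ?r z \<in> map_at F G beta x y ` fibre F" unfolding S by (rule tf_fibre)
    then obtain w where w: "w \<in> fibre F" "map_at F G beta x y w = tf ?r z" by (rule imageE) simp
    define w' where "w' = vec ?m w"
    have w': "w' \<in> carrier_vec ?m" by (simp add: w'_def)
    have "tf ?r (?B *\<^sub>v w') = tf ?r z" using w map_at_tf[OF w', of G beta x y] fibre_tf[OF w(1)]
      unfolding w'_def by simp
    then have e: "?B *\<^sub>v w' = z" by (rule tf_inj[OF mult_mat_vec_carrier[OF AMat_carrier w'] z])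
    show "\<exists>w\<in>carrier_vec ?m. ?B *\<^sub>v w = z" using e w' by (rule bexI)
  next
    fix w :: "complex vec" assume w: "w \<in> carrier_vec ?m" and Bw: "?B *\<^sub>v w = 0\<^sub>v ?r"
    have "map_at F G beta x y (tf ?m w) = (\<lambda>_. 0)" using map_at_tf[OF w, of G beta x y] Bw tf_zero by simp
    then have "tf ?m w \<in> map_at E F alpha x y ` fibre E" unfolding X using tf_fibre by blast
    then obtain v where v: "v \<in> fibre E" "map_at E F alpha x y v = tf ?m w" by (rule imageE) simp
    define v' where "v' = vec ?n v"
    have v': "v' \<in> carrier_vec ?n" by (simp add: v'_def)
    have "tf ?m (?A *\<^sub>v v') = tf ?m w" using v map_at_tf[OF v', of F alpha x y] fibre_tf[OF v(1)]
      unfolding v'_def by simp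
    then have e: "?A *\<^sub>v v' = w" by (rule tf_inj[OF mult_mat_vec_carrier[OF AMat_carrier v'] w])
    show "\<exists>v\<in>carrier_vec ?n. ?A *\<^sub>v v = w" using e v' by (rule bexI)
  next
    fix v :: "complex vec" assume v: "v \<in> carrier_vec ?n"
    have "map_at E F alpha x y (tf ?n v) \<in> {w \<in> fibre F. map_at F G beta x y w = (\<lambda>_. 0)}"
      unfolding X[symmetric] using tf_fibre by (rule imageI)
    then have "map_at F G beta x y (tf ?m (?A *\<^sub>v v)) = (\<lambda>_. 0)" using map_at_tf[OF v] by simp
    then have "tf ?r (?B *\<^sub>v (?A *\<^sub>v v)) = tf ?r (0\<^sub>v ?r)"
      using map_at_tf[OF mult_mat_vec_carrier[OF AMat_carrier v], where Q=G and phi=beta and x=x and y=y] tf_zero by simp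
    then show "?B *\<^sub>v (?A *\<^sub>v v) = 0\<^sub>v ?r"
      by (rule tf_inj[OF mult_mat_vec_carrier[OF AMat_carrier mult_mat_vec_carrier[OF AMat_carrier v]] zero_carrier_vec])
  qed
qed



lemma hpoly_scale: "hpoly_eval d c (l*x) (l*y) = l powi d * hpoly_eval d c x y"
proof (cases "d < 0")
  case True
  then show ?thesis by (simp add: hpoly_eval_def)
next
  case False
  have pw: "l powi d = l ^ nat d" using False by (metis nat_0_le not_less power_int_of_nat)
  have "(\<Sum>k\<le>nat d. c k * (l*x)^k * (l*y)^(nat d - k)) = (\<Sum>k\<le>nat d. l^(nat d) * (c k * x^k * y^(nat d - k)))"
  proof (rule sum.cong[OF refl])
    fix k assume "k \<in> {..nat d}"
    then have h: "l^k * l^(nat d - k) = l^(nat d)" by (simp add: power_add[symmetric])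
    have "c k * (l*x)^k * (l*y)^(nat d - k) = (l^k * l^(nat d - k)) * (c k * x^k * y^(nat d - k))"
      by (simp add: power_mult_distrib mult_ac)
    then show "c k * (l*x)^k * (l*y)^(nat d - k) = l^(nat d) * (c k * x^k * y^(nat d - k))"
      unfolding h .
  qed
  then show ?thesis using False pw by (simp add: hpoly_eval_def sum_distrib_left)
qed

lemma AMat_scale:
  assumes l: "l \<noteq> 0" and j: "j < length Q" and i: "i < length P"
  shows "AMat P Q phi (l*x) (l*y) $$ (j,i) = l powi (Q!j) * l powi (-(P!i)) * AMat P Q phi x y $$ (j,i)"
proof -
  have "l powi (Q!j - P!i) = l powi (Q!j) * l powi (-(P!i))"
    using l power_int_add[of l "Q!j" "-(P!i)"] by simp
  then show ?thesis using j i by (simp add: AMat_index hpoly_scale)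
qed

lemma prod_powi: fixes l :: complex assumes l: "l \<noteq> 0" and S: "finite S"
  shows "(\<Prod>i\<in>S. l powi f i) = l powi (\<Sum>i\<in>S. f i)"
  using S by (induction S rule: finite_induct) (auto simp: power_int_add l)

lemma det_scale:
  fixes A :: "complex mat"
  assumes A: "A \<in> carrier_mat k k"
  shows "det (mat k k (\<lambda>(i,j). a i * b j * A $$ (i,j))) = (\<Prod>i=0..<k. a i) * (\<Prod>j=0..<k. b j) * det A"
proof -
  let ?M = "mat k k (\<lambda>(i,j). a i * b j * A $$ (i,j))"
  have tm: "(\<Prod>i=0..<k. ?M $$ (i, p i)) = (\<Prod>i=0..<k. a i) * (\<Prod>j=0..<k. b j) * (\<Prod>i=0..<k. A $$ (i, p i))"
    if p: "p permutes {0..<k}" for p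
  proof -
    have pi: "i < k \<Longrightarrow> p i < k" for i using permutes_in_image[OF p] by auto
    have "(\<Prod>i=0..<k. ?M $$ (i, p i)) = (\<Prod>i=0..<k. a i * b (p i) * A $$ (i, p i))"
      by (rule prod.cong[OF refl]) (simp add: pi)
    also have "\<dots> = (\<Prod>i=0..<k. a i) * (\<Prod>i=0..<k. b (p i)) * (\<Prod>i=0..<k. A $$ (i, p i))"
      by (simp add: prod.distrib)
    also have "(\<Prod>i=0..<k. b (p i)) = (\<Prod>j=0..<k. b j)"
      using prod.permute[OF p, of b] by (simp add: comp_def)
    finally show ?thesis .
  qed
  have d: "dim_row A = k" "dim_col A = k" using A by auto
  have dM: "dim_row ?M = k" "dim_col ?M = k" by auto
  have "(\<Sum>p\<in>{p. p permutes {0..<k}}. signof p * (\<Prod>i=0..<k. ?M $$ (i, p i))) =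
      (\<Sum>p\<in>{p. p permutes {0..<k}}. ((\<Prod>i=0..<k. a i) * (\<Prod>j=0..<k. b j)) * (signof p * (\<Prod>i=0..<k. A $$ (i, p i))))"
  proof (rule sum.cong[OF refl])
    fix p assume "p \<in> {p. p permutes {0..<k}}"
    then have p: "p permutes {0..<k}" by simp
    show "signof p * (\<Prod>i=0..<k. ?M $$ (i, p i)) = ((\<Prod>i=0..<k. a i) * (\<Prod>j=0..<k. b j)) * (signof p * (\<Prod>i=0..<k. A $$ (i, p i)))"
      unfolding tm[OF p] by (simp only: mult_ac)
  qed
  then show ?thesis unfolding Determinant.det_def d dM
    by (simp add: sum_distrib_left[symmetric])
qed

lemma hpoly_holo:
  assumes "X holomorphic_on S" "Y holomorphic_on S"
  shows "(\<lambda>t. hpoly_eval d c (X t) (Y t)) holomorphic_on S"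
  unfolding hpoly_eval_def using assms by (cases "d < 0") (auto intro!: holomorphic_intros)

lemma det_holo:
  fixes M :: "complex \<Rightarrow> complex mat"
  assumes car: "\<And>t. M t \<in> carrier_mat k k"
    and h: "\<And>i j. i < k \<Longrightarrow> j < k \<Longrightarrow> (\<lambda>t. M t $$ (i,j)) holomorphic_on S"
  shows "(\<lambda>t. det (M t)) holomorphic_on S"
proof -
  have eq: "(\<lambda>t. det (M t)) = (\<lambda>t. \<Sum>p\<in>{p. p permutes {0..<k}}. signof p * (\<Prod>i=0..<k. M t $$ (i, p i)))"
  proof
    fix t
    have d: "dim_row (M t) = k" "dim_col (M t) = k" using car[of t] by auto
    show "det (M t) = (\<Sum>p\<in>{p. p permutes {0..<k}}. signof p * (\<Prod>i=0..<k. M t $$ (i, p i)))"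
      unfolding Determinant.det_def d by simp
  qed
  show ?thesis unfolding eq
  proof (intro holomorphic_on_sum holomorphic_on_mult holomorphic_on_prod holomorphic_on_const)
    fix p i assume "p \<in> {p. p permutes {0..<k}}" "i \<in> {0..<k}"
    then have "i < k" "p i < k" using permutes_in_image by auto
    then show "(\<lambda>t. M t $$ (i, p i)) holomorphic_on S" by (rule h)
  qed
qed

lemma liou:
  fixes f g :: "complex \<Rightarrow> complex"
  assumes holo: "f holomorphic_on UNIV" and cont: "isCont g 0" and K: "K > 0"
    and rel: "\<And>x. x \<noteq> 0 \<Longrightarrow> f x * x ^ K = g (inverse x)"
  shows "f z = 0"
proof (rule Liouville_weak_0[OF holo])
  have lim1: "((\<lambda>x. g (inverse x)) \<longlongrightarrow> g 0) at_infinity"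
    by (rule isCont_tendsto_compose[OF cont tendsto_inverse_0])
  have lim2: "((\<lambda>x::complex. inverse (x ^ K)) \<longlongrightarrow> 0) at_infinity"
    by (rule filterlim_compose[OF tendsto_inverse_0 filterlim_power_at_infinity]) (use K in simp)
  have lim: "((\<lambda>x. g (inverse x) * inverse (x ^ K)) \<longlongrightarrow> 0) at_infinity"
    using tendsto_mult[OF lim1 lim2] by simp
  have ev: "\<forall>\<^sub>F x in at_infinity. g (inverse x) * inverse (x ^ K) = f x"
    unfolding eventually_at_infinity
  proof (intro exI[of _ 1] allI impI)
    fix x :: complex assume "1 \<le> norm x"
    then have x: "x \<noteq> 0" by auto
    then show "g (inverse x) * inverse (x ^ K) = f x" using rel[OF x] by (simp add: field_simps)
  qed
  show "(f \<longlongrightarrow> 0) at_infinity" by (rule Lim_transform_eventually[OF lim ev])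
qed

lemma holo_quot:
  fixes f :: "complex \<Rightarrow> complex"
  assumes loc: "\<And>t0. \<exists>g h. g holomorphic_on UNIV \<and> h holomorphic_on UNIV \<and> g t0 \<noteq> 0 \<and>
      (\<forall>t. g t \<noteq> 0 \<longrightarrow> f t = h t / g t)"
  shows "f holomorphic_on UNIV"
proof -
  have "f field_differentiable at t0" for t0
  proof -
    obtain g h where g: "g holomorphic_on UNIV" and h: "h holomorphic_on UNIV" and g0: "g t0 \<noteq> 0"
      and eq: "\<And>t. g t \<noteq> 0 \<Longrightarrow> f t = h t / g t" using loc[of t0] by blast
    define U where "U = g -` (- {0})"
    have U: "open U" unfolding U_def
      by (rule open_vimage) (use holomorphic_on_imp_continuous_on[OF g] in auto)
    have "(\<lambda>t. h t / g t) holomorphic_on U"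
      by (intro holomorphic_intros holomorphic_on_subset[OF h] holomorphic_on_subset[OF g]) (auto simp: U_def)
    moreover have "f holomorphic_on U \<longleftrightarrow> (\<lambda>t. h t / g t) holomorphic_on U"
      by (rule holomorphic_cong) (auto simp: U_def eq)
    ultimately have "f holomorphic_on U" by simp
    then show ?thesis by (rule holomorphic_on_imp_differentiable_at[OF _ U]) (simp add: U_def g0)
  qed
  then show ?thesis unfolding holomorphic_on_def using field_differentiable_at_within by blast
qed




lemma AMat_holo:
  assumes "X holomorphic_on S" "Y holomorphic_on S" "j < length Q" "i < length P"
  shows "(\<lambda>t. AMat P Q phi (X t) (Y t) $$ (j,i)) holomorphic_on S"
  using assms by (simp add: AMat_index hpoly_holo)

lemma mult_index_sum:
  fixes A C :: "complex mat"
  assumes "A \<in> carrier_mat a b" "C \<in> carrier_mat b c" "j < a" "i < c"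
  shows "(A * C) $$ (j,i) = (\<Sum>l=0..<b. A $$ (j,l) * C $$ (l,i))"
  using assms by (simp add: scalar_prod_def)

lemma AMat_mult_holo:
  assumes X: "X holomorphic_on S" and Y: "Y holomorphic_on S" and C0: "C0 \<in> carrier_mat (length P) k"
    and j: "j < length Q" and i: "i < k"
  shows "(\<lambda>t. (AMat P Q phi (X t) (Y t) * C0) $$ (j,i)) holomorphic_on S"
proof -
  have eq: "(\<lambda>t. (AMat P Q phi (X t) (Y t) * C0) $$ (j,i)) =
    (\<lambda>t. \<Sum>l=0..<length P. AMat P Q phi (X t) (Y t) $$ (j,l) * C0 $$ (l,i))"
    by (rule ext, rule mult_index_sum[OF AMat_carrier C0 j i])
  show ?thesis unfolding eq
    by (intro holomorphic_on_sum holomorphic_on_mult holomorphic_on_const AMat_holo[OF X Y j]) auto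
qed

locale ses =
  fixes E F G :: "int list" and alpha beta :: "nat \<Rightarrow> nat \<Rightarrow> nat \<Rightarrow> complex"
  assumes ex: "short_exact E F G alpha beta"
begin

definition AM where "AM x y = AMat E F alpha x y"
definition BM where "BM x y = AMat F G beta x y"

lemma AM_carrier[simp]: "AM x y \<in> carrier_mat (length F) (length E)" by (simp add: AM_def)
lemma BM_carrier[simp]: "BM x y \<in> carrier_mat (length G) (length F)" by (simp add: BM_def)
lemma AM_dims[simp]: "dim_row (AM x y) = length F" "dim_col (AM x y) = length E" by (simp_all add: AM_def)
lemma BM_dims[simp]: "dim_row (BM x y) = length G" "dim_col (BM x y) = length F" by (simp_all add: BM_def)

lemma xtp: "(x,y) \<noteq> (0,0) \<Longrightarrow> xt (AM x y) (BM x y) (length E) (length F) (length G)"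
  unfolding AM_def BM_def by (rule xt_at[OF ex])

lemma dimF: "length F = length E + length G"
  using xt.dim[OF xtp[of 1 0]] by simp

definition Cp where "Cp x y = (SOME C. C \<in> carrier_mat (length F) (length G) \<and> BM x y * C = 1\<^sub>m (length G))"

lemma Cp: assumes p: "(x,y) \<noteq> (0,0)"
  shows "Cp x y \<in> carrier_mat (length F) (length G)" "BM x y * Cp x y = 1\<^sub>m (length G)"
proof -
  obtain C where "C \<in> carrier_mat (length F) (length G) \<and> BM x y * C = 1\<^sub>m (length G)"
    using xt.ex_C[OF xtp[OF p]] by blast
  then have "Cp x y \<in> carrier_mat (length F) (length G) \<and> BM x y * Cp x y = 1\<^sub>m (length G)"
    unfolding Cp_def by (rule someI)
  then show "Cp x y \<in> carrier_mat (length F) (length G)" "BM x y * Cp x y = 1\<^sub>m (length G)" by auto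
qed

definition W where "W x y = det (hcat (AM x y) (Cp x y))"

lemma W_ne: "(x,y) \<noteq> (0,0) \<Longrightarrow> W x y \<noteq> 0"
  unfolding W_def using xt.det_ne[OF xtp Cp] by blast

lemma W_formula: "(x,y) \<noteq> (0,0) \<Longrightarrow> C' \<in> carrier_mat (length F) (length G) \<Longrightarrow>
    det (hcat (AM x y) C') = W x y * det (BM x y * C')"
  unfolding W_def using xt.indep[OF xtp Cp] by blast

lemma powi_cancel: "(l::complex) \<noteq> 0 \<Longrightarrow> l powi (-a) * l powi a = 1"
  by (simp add: power_int_minus field_simps)

lemma W_scale:
  assumes l: "l \<noteq> 0" and p: "(x,y) \<noteq> (0,0)"
  shows "W (l*x) (l*y) * l powi (sum_list G) = l powi (sum_list F) * l powi (- sum_list E) * W x y"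
proof -
  let ?n = "length E" and ?m = "length F" and ?r = "length G"
  have lp: "(l*x, l*y) \<noteq> (0,0)" using l p by auto
  define C where "C = Cp x y"
  have C: "C \<in> carrier_mat ?m ?r" "BM x y * C = 1\<^sub>m ?r" using Cp[OF p] by (auto simp: C_def)
  define C' where "C' = mat ?m ?r (\<lambda>(j,k). l powi (F!j) * C $$ (j,k))"
  have C': "C' \<in> carrier_mat ?m ?r" by (simp add: C'_def)
  have BC': "BM (l*x) (l*y) * C' = mat ?r ?r (\<lambda>(a,b). l powi (G!a) * 1 * 1\<^sub>m ?r $$ (a,b))"
  proof (rule eq_matI)
    fix a b assume a: "a < dim_row (mat ?r ?r (\<lambda>(a,b). l powi (G!a) * 1 * 1\<^sub>m ?r $$ (a,b)))"
      and b: "b < dim_col (mat ?r ?r (\<lambda>(a,b). l powi (G!a) * 1 * 1\<^sub>m ?r $$ (a,b)))"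
    then have a: "a < ?r" and b: "b < ?r" by auto
    have "(BM (l*x) (l*y) * C') $$ (a,b) = (\<Sum>j=0..<?m. BM (l*x) (l*y) $$ (a,j) * C' $$ (j,b))"
      by (rule mult_index_sum[OF BM_carrier C' a b])
    also have "\<dots> = (\<Sum>j=0..<?m. l powi (G!a) * (BM x y $$ (a,j) * C $$ (j,b)))"
    proof (rule sum.cong[OF refl])
      fix j assume "j \<in> {0..<?m}"
      then have j: "j < ?m" by simp
      have "BM (l*x) (l*y) $$ (a,j) * C' $$ (j,b) =
          l powi (G!a) * (l powi (-(F!j)) * l powi (F!j)) * (BM x y $$ (a,j) * C $$ (j,b))"
        unfolding BM_def AMat_scale[OF l a j] using j b by (simp add: C'_def mult_ac)
      then show "BM (l*x) (l*y) $$ (a,j) * C' $$ (j,b) = l powi (G!a) * (BM x y $$ (a,j) * C $$ (j,b))"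
        using powi_cancel[OF l] by simp
    qed
    also have "\<dots> = l powi (G!a) * (BM x y * C) $$ (a,b)"
      by (simp add: sum_distrib_left mult_index_sum[OF BM_carrier C(1) a b])
    also have "\<dots> = mat ?r ?r (\<lambda>(a,b). l powi (G!a) * 1 * 1\<^sub>m ?r $$ (a,b)) $$ (a,b)"
      using a b unfolding C(2) by simp
    finally show "(BM (l*x) (l*y) * C') $$ (a,b) = mat ?r ?r (\<lambda>(a,b). l powi (G!a) * 1 * 1\<^sub>m ?r $$ (a,b)) $$ (a,b)" .
  qed (use C' in auto)
  have detBC': "det (BM (l*x) (l*y) * C') = l powi (sum_list G)"
    unfolding BC' det_scale[OF one_carrier_mat, of ?r "\<lambda>a. l powi (G!a)" "\<lambda>_. 1"]
    using prod_powi[OF l, of "{0..<?r}" "\<lambda>a. G!a"] by (simp add: sum_list_sum_nth)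
  define bf where "bf i = (if i < ?n then l powi (-(E!i)) else 1)" for i
  have M: "hcat (AM x y) C \<in> carrier_mat ?m ?m" using hcat_carrier[OF AM_carrier C(1)] dimF by simp
  have hc: "hcat (AM (l*x) (l*y)) C' = mat ?m ?m (\<lambda>(j,i). l powi (F!j) * bf i * hcat (AM x y) C $$ (j,i))"
  proof (rule eq_matI)
    fix j i assume j: "j < dim_row (mat ?m ?m (\<lambda>(j,i). l powi (F!j) * bf i * hcat (AM x y) C $$ (j,i)))"
      and i: "i < dim_col (mat ?m ?m (\<lambda>(j,i). l powi (F!j) * bf i * hcat (AM x y) C $$ (j,i)))"
    then have j: "j < ?m" and i: "i < ?n + ?r" using dimF by auto
    show "hcat (AM (l*x) (l*y)) C' $$ (j,i) = mat ?m ?m (\<lambda>(j,i). l powi (F!j) * bf i * hcat (AM x y) C $$ (j,i)) $$ (j,i)"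
    proof (cases "i < ?n")
      case True
      then show ?thesis
        unfolding hcat_index[OF AM_carrier C' j i] using j i dimF hcat_index[OF AM_carrier C(1) j i]
        by (simp add: bf_def AM_def AMat_scale[OF l j True])
    next
      case False
      then show ?thesis
        unfolding hcat_index[OF AM_carrier C' j i] using j i dimF hcat_index[OF AM_carrier C(1) j i]
        by (simp add: bf_def C'_def)
    qed
  qed (use hcat_carrier[OF AM_carrier C'] dimF in auto)
  have pF: "(\<Prod>j=0..<?m. l powi (F!j)) = l powi (sum_list F)"
    using prod_powi[OF l, of "{0..<?m}" "\<lambda>j. F!j"] by (simp add: sum_list_sum_nth)
  have pE: "(\<Prod>i=0..<?m. bf i) = l powi (- sum_list E)"
  proof -
    have "(\<Prod>i=0..<?m. bf i) = (\<Prod>i=0..<?n. bf i) * (\<Prod>i=?n..<?m. bf i)"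
      using dimF by (simp add: prod.atLeastLessThan_concat)
    also have "(\<Prod>i=?n..<?m. bf i) = 1" by (rule prod.neutral) (simp add: bf_def)
    also have "(\<Prod>i=0..<?n. bf i) = (\<Prod>i=0..<?n. l powi (-(E!i)))" by (rule prod.cong) (auto simp: bf_def)
    also have "\<dots> = l powi (\<Sum>i=0..<?n. -(E!i))" by (rule prod_powi[OF l]) simp
    also have "(\<Sum>i=0..<?n. -(E!i)) = - sum_list E" by (simp add: sum_list_sum_nth sum_negf)
    finally show ?thesis by simp
  qed
  have "det (hcat (AM (l*x) (l*y)) C') = l powi (sum_list F) * l powi (- sum_list E) * W x y"
    unfolding hc det_scale[OF M] pF pE by (simp add: W_def C_def)
  moreover have "det (hcat (AM (l*x) (l*y)) C') = W (l*x) (l*y) * l powi (sum_list G)"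
    using W_formula[OF lp C'] detBC' by simp
  ultimately show ?thesis by simp
qed


lemma hcat_holo:
  assumes X: "X holomorphic_on UNIV" and Y: "Y holomorphic_on UNIV"
    and C0: "C0 \<in> carrier_mat (length F) (length G)"
    and j: "j < length F" and i: "i < length F"
  shows "(\<lambda>t. hcat (AM (X t) (Y t)) C0 $$ (j,i)) holomorphic_on UNIV"
proof -
  have i': "i < length E + length G" using i dimF by simp
  show ?thesis
  proof (cases "i < length E")
    case True
    have "(\<lambda>t. hcat (AM (X t) (Y t)) C0 $$ (j,i)) = (\<lambda>t. AMat E F alpha (X t) (Y t) $$ (j,i))"
      by (rule ext) (simp add: hcat_index[OF AM_carrier C0 j i'] True, simp add: AM_def)
    then show ?thesis using AMat_holo[OF X Y j True] by simp
  next
    case False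
    have "(\<lambda>t. hcat (AM (X t) (Y t)) C0 $$ (j,i)) = (\<lambda>t. C0 $$ (j, i - length E))"
      by (rule ext) (simp add: hcat_index[OF AM_carrier C0 j i'] False)
    then show ?thesis by simp
  qed
qed

lemma W_holo:
  assumes X: "X holomorphic_on UNIV" and Y: "Y holomorphic_on UNIV" and nz: "\<And>t. (X t, Y t) \<noteq> (0,0)"
  shows "(\<lambda>t. W (X t) (Y t)) holomorphic_on UNIV"
proof (rule holo_quot)
  fix t0
  define C0 where "C0 = Cp (X t0) (Y t0)"
  have C0: "C0 \<in> carrier_mat (length F) (length G)" "BM (X t0) (Y t0) * C0 = 1\<^sub>m (length G)"
    using Cp[OF nz] by (auto simp: C0_def)
  define g where "g t = det (BM (X t) (Y t) * C0)" for t
  define h where "h t = det (hcat (AM (X t) (Y t)) C0)" for t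
  have g: "g holomorphic_on UNIV" unfolding g_def
  proof (rule det_holo[of _ "length G"])
    show "\<And>t. BM (X t) (Y t) * C0 \<in> carrier_mat (length G) (length G)" by (rule mult_carrier_mat[OF BM_carrier C0(1)])
    fix i j assume "i < length G" "j < length G"
    then show "(\<lambda>t. (BM (X t) (Y t) * C0) $$ (i,j)) holomorphic_on UNIV"
      unfolding BM_def by (intro AMat_mult_holo[OF X Y C0(1)])
  qed
  have h: "h holomorphic_on UNIV" unfolding h_def
  proof (rule det_holo[of _ "length F"])
    show "\<And>t. hcat (AM (X t) (Y t)) C0 \<in> carrier_mat (length F) (length F)"
      using hcat_carrier[OF AM_carrier C0(1)] dimF by simp
    fix i j assume "i < length F" "j < length F"
    then show "(\<lambda>t. hcat (AM (X t) (Y t)) C0 $$ (i,j)) holomorphic_on UNIV"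
      by (intro hcat_holo[OF X Y C0(1)])
  qed
  have g0: "g t0 \<noteq> 0" unfolding g_def C0(2) by simp
  have "\<forall>t. g t \<noteq> 0 \<longrightarrow> W (X t) (Y t) = h t / g t"
    using W_formula[OF nz C0(1)] unfolding g_def h_def by simp
  then show "\<exists>g h. g holomorphic_on UNIV \<and> h holomorphic_on UNIV \<and> g t0 \<noteq> 0 \<and> (\<forall>t. g t \<noteq> 0 \<longrightarrow> W (X t) (Y t) = h t / g t)"
    using g h g0 by blast
qed

lemma holo_cont0: "f holomorphic_on UNIV \<Longrightarrow> isCont f 0"
  by (metis holomorphic_on_imp_differentiable_at open_UNIV UNIV_I field_differentiable_imp_continuous_at)

theorem deg: "sum_list F = sum_list E + sum_list G"
proof (rule ccontr)
  define d where "d = sum_list F - sum_list E - sum_list G"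
  assume "sum_list F \<noteq> sum_list E + sum_list G"
  then have d0: "d \<noteq> 0" by (simp add: d_def)
  have scal: "W (l*x) (l*y) = l powi d * W x y" if l: "l \<noteq> 0" and p: "(x,y) \<noteq> (0,0)" for l x y
  proof -
    have "l powi d = l powi (sum_list F) * l powi (- sum_list E) * l powi (- sum_list G)"
      unfolding d_def using l by (simp add: power_int_add[symmetric])
    moreover have "W (l*x) (l*y) = W (l*x) (l*y) * l powi (sum_list G) * l powi (- sum_list G)"
      using powi_cancel[OF l, of "sum_list G"] by (simp add: mult_ac)
    ultimately show ?thesis unfolding W_scale[OF l p] by (simp add: mult_ac)
  qed
  have rel: "W x 1 = x powi d * W 1 (inverse x)" if x: "x \<noteq> 0" for x
    using scal[OF x, of 1 "inverse x"] x by simp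
  have hol1: "(\<lambda>x. W x 1) holomorphic_on UNIV" using W_holo[of "\<lambda>t. t" "\<lambda>t. 1"] by simp
  have hol2: "(\<lambda>t. W 1 t) holomorphic_on UNIV" using W_holo[of "\<lambda>t. 1" "\<lambda>t. t"] by simp
  have ne: "W x y \<noteq> 0" if "(x,y) \<noteq> (0,0)" for x y using W_ne that by blast
  show False
  proof (cases "d < 0")
    case True
    define K where "K = nat (-d)"
    have K: "K > 0" using True by (simp add: K_def)
    have "W x 1 * x ^ K = W 1 (inverse x)" if x: "x \<noteq> 0" for x
    proof -
      have "x powi d * x ^ K = 1" using True x unfolding K_def
        by (metis (no_types) add.inverse_inverse mult.commute nat_0_le neg_0_le_iff_le less_imp_le power_int_of_nat powi_cancel)
      then show ?thesis unfolding rel[OF x] by (simp add: mult_ac)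
    qed
    from liou[OF hol1 holo_cont0[OF hol2] K this] have "W 0 1 = 0" .
    with ne[of 0 1] show False by simp
  next
    case False
    define K where "K = nat d"
    have K: "K > 0" using False d0 by (simp add: K_def)
    have "inverse (W x 1) * x ^ K = inverse (W 1 (inverse x))" if x: "x \<noteq> 0" for x
    proof -
      have "x powi d = x ^ K" using False unfolding K_def by (simp add: power_int_of_nat[symmetric])
      then show ?thesis unfolding rel[OF x] using x by (simp add: field_simps)
    qed
    moreover have "(\<lambda>x. inverse (W x 1)) holomorphic_on UNIV"
      by (rule holomorphic_on_inverse[OF hol1]) (use ne in simp)
    moreover have "isCont (\<lambda>t. inverse (W 1 t)) 0"
      by (rule continuous_at_within_inverse[OF holo_cont0[OF hol2]]) (use ne in simp)
    ultimately have "inverse (W 0 1) = 0" using liou[OF _ _ K] by blast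
    with ne[of 0 1] show False by simp
  qed
qed


lemma mv_sum:
  fixes A :: "complex mat"
  assumes "A \<in> carrier_mat a b" "v \<in> carrier_vec b" "k < a"
  shows "(A *\<^sub>v v) $ k = (\<Sum>i=0..<b. A $$ (k,i) * v $ i)"
  using assms by (simp add: scalar_prod_def)

lemma replace_col_index:
  "A \<in> carrier_mat a b \<Longrightarrow> i < a \<Longrightarrow> c < b \<Longrightarrow> replace_col A w k $$ (i,c) = (if c = k then w $ i else A $$ (i,c))"
  by (simp add: replace_col_def)

lemma replace_col_carrier: "A \<in> carrier_mat a b \<Longrightarrow> replace_col A w k \<in> carrier_mat a b"
  by (simp add: replace_col_def)

lemma hpoly_neg: "d < 0 \<Longrightarrow> hpoly_eval d c x y = 0"
  by (simp add: hpoly_eval_def)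

theorem max_bound:
  assumes j: "j < length F"
  shows "\<exists>l \<in> set E \<union> set G. F!j \<le> l"
proof (rule ccontr)
  assume "\<not> ?thesis"
  then have lt: "\<And>l. l \<in> set E \<union> set G \<Longrightarrow> l < F!j" by (meson not_le)
  have ltE: "i < length E \<Longrightarrow> E!i < F!j" for i using lt nth_mem by blast
  have ltG: "k < length G \<Longrightarrow> G!k < F!j" for k using lt nth_mem by blast
  let ?n = "length E" and ?m = "length F" and ?r = "length G"
  define z :: "complex vec" where "z = unit_vec ?m j"
  have z: "z \<in> carrier_vec ?m" by (simp add: z_def)
  have Bz: "BM x y *\<^sub>v z = 0\<^sub>v ?r" for x y
  proof (rule eq_vecI)
    fix k assume "k < dim_vec (0\<^sub>v ?r :: complex vec)"
    then have k: "k < ?r" by simp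
    have "(BM x y *\<^sub>v z) $ k = row (BM x y) k $ j" using k j by (simp add: z_def)
    also have "\<dots> = 0" using k j ltG[OF k] by (simp add: BM_def AMat_index hpoly_neg)
    finally show "(BM x y *\<^sub>v z) $ k = 0\<^sub>v ?r $ k" using k by simp
  qed simp
  define V where "V x y = (SOME v. v \<in> carrier_vec ?n \<and> AM x y *\<^sub>v v = z)" for x y
  have V: "V x y \<in> carrier_vec ?n \<and> AM x y *\<^sub>v V x y = z" if p: "(x,y) \<noteq> (0,0)" for x y
  proof -
    obtain v where "v \<in> carrier_vec ?n" "AM x y *\<^sub>v v = z" using xt.exact[OF xtp[OF p] z Bz] by blast
    then have "v \<in> carrier_vec ?n \<and> AM x y *\<^sub>v v = z" by blast
    then show ?thesis unfolding V_def by (rule someI)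
  qed
  have Vscale: "V (l*x) (l*y) $ i * l powi (F!j - E!i) = V x y $ i"
    if l: "l \<noteq> 0" and p: "(x,y) \<noteq> (0,0)" and i: "i < ?n" for l x y i
  proof -
    have lp: "(l*x, l*y) \<noteq> (0,0)" using l p by auto
    define u' where "u' = vec ?n (\<lambda>i. l powi (-(E!i)) * V (l*x) (l*y) $ i)"
    have u': "u' \<in> carrier_vec ?n" by (simp add: u'_def)
    have Vp: "V x y \<in> carrier_vec ?n" "AM x y *\<^sub>v V x y = z" using V[OF p] by auto
    have Vlp: "V (l*x) (l*y) \<in> carrier_vec ?n" "AM (l*x) (l*y) *\<^sub>v V (l*x) (l*y) = z" using V[OF lp] by auto
    have "AM x y *\<^sub>v u' = AM x y *\<^sub>v (l powi (-(F!j)) \<cdot>\<^sub>v V x y)"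
    proof (rule eq_vecI)
      fix a assume "a < dim_vec (AM x y *\<^sub>v (l powi (-(F!j)) \<cdot>\<^sub>v V x y))"
      then have a: "a < ?m" by simp
      have "z $ a = (AM (l*x) (l*y) *\<^sub>v V (l*x) (l*y)) $ a" using Vlp by simp
      also have "\<dots> = (\<Sum>i=0..<?n. AM (l*x) (l*y) $$ (a,i) * V (l*x) (l*y) $ i)"
        by (rule mv_sum[OF AM_carrier Vlp(1) a])
      also have "\<dots> = (\<Sum>i=0..<?n. l powi (F!a) * (AM x y $$ (a,i) * u' $ i))"
        by (rule sum.cong[OF refl]) (simp add: AM_def AMat_scale[OF l a] u'_def mult_ac)
      also have "\<dots> = l powi (F!a) * (AM x y *\<^sub>v u') $ a"
        by (simp add: sum_distrib_left mv_sum[OF AM_carrier u' a])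
      finally have za: "z $ a = l powi (F!a) * (AM x y *\<^sub>v u') $ a" .
      have "(AM x y *\<^sub>v u') $ a = l powi (-(F!a)) * z $ a"
        unfolding za mult.assoc[symmetric] powi_cancel[OF l] by simp
      also have "\<dots> = l powi (-(F!j)) * z $ a" using a j by (cases "a = j") (auto simp: z_def)
      also have "\<dots> = (AM x y *\<^sub>v (l powi (-(F!j)) \<cdot>\<^sub>v V x y)) $ a"
        using Vp a z by (simp add: mult_mat_vec[OF AM_carrier Vp(1)])
      finally show "(AM x y *\<^sub>v u') $ a = (AM x y *\<^sub>v (l powi (-(F!j)) \<cdot>\<^sub>v V x y)) $ a" .
    qed simp
    from xt.v_unique[OF xtp[OF p] u' _ this] Vp(1)
    have "u' = l powi (-(F!j)) \<cdot>\<^sub>v V x y" by simp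
    then have "u' $ i = l powi (-(F!j)) * V x y $ i" using i Vp(1) by simp
    then have e: "l powi (-(E!i)) * V (l*x) (l*y) $ i = l powi (-(F!j)) * V x y $ i" using i by (simp add: u'_def)
    have "V (l*x) (l*y) $ i * l powi (F!j - E!i) = l powi (F!j) * (l powi (-(E!i)) * V (l*x) (l*y) $ i)"
      using l by (simp add: power_int_diff power_int_minus field_simps)
    also have "\<dots> = V x y $ i" unfolding e mult.assoc[symmetric] using powi_cancel[OF l, of "F!j"]
      by (simp add: mult.commute)
    finally show ?thesis .
  qed
  have Vholo: "(\<lambda>t. V (X t) (Y t) $ i) holomorphic_on UNIV"
    if X: "X holomorphic_on UNIV" and Y: "Y holomorphic_on UNIV" and nz: "\<And>t. (X t, Y t) \<noteq> (0,0)"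
      and i: "i < ?n" for X Y i
  proof (rule holo_quot)
    fix t0
    define C0 where "C0 = Cp (X t0) (Y t0)"
    have C0: "C0 \<in> carrier_mat ?m ?r" "BM (X t0) (Y t0) * C0 = 1\<^sub>m ?r"
      using Cp[OF nz] by (auto simp: C0_def)
    define M where "M t = hcat (AM (X t) (Y t)) C0" for t
    have M: "M t \<in> carrier_mat ?m ?m" for t using hcat_carrier[OF AM_carrier C0(1)] dimF by (simp add: M_def)
    define g where "g t = det (M t)" for t
    define h where "h t = det (replace_col (M t) z i)" for t
    have g: "g holomorphic_on UNIV" unfolding g_def
    proof (rule det_holo[of _ ?m])
      show "\<And>t. M t \<in> carrier_mat ?m ?m" by (rule M)
      fix a b assume "a < ?m" "b < ?m"
      then show "(\<lambda>t. M t $$ (a,b)) holomorphic_on UNIV" unfolding M_def by (intro hcat_holo[OF X Y C0(1)])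
    qed
    have h: "h holomorphic_on UNIV" unfolding h_def
    proof (rule det_holo[of _ ?m])
      show "\<And>t. replace_col (M t) z i \<in> carrier_mat ?m ?m" by (rule replace_col_carrier[OF M])
      fix a b assume ab: "a < ?m" "b < ?m"
      have "(\<lambda>t. replace_col (M t) z i $$ (a,b)) = (\<lambda>t. if b = i then z $ a else M t $$ (a,b))"
        by (rule ext) (simp add: replace_col_index[OF M ab])
      moreover have "(\<lambda>t. M t $$ (a,b)) holomorphic_on UNIV" unfolding M_def using ab by (intro hcat_holo[OF X Y C0(1)])
      ultimately show "(\<lambda>t. replace_col (M t) z i $$ (a,b)) holomorphic_on UNIV" by (cases "b = i") simp_all
    qed
    have g0: "g t0 \<noteq> 0" unfolding g_def M_def using xt.det_ne[OF xtp[OF nz] C0] .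
    have "\<forall>t. g t \<noteq> 0 \<longrightarrow> V (X t) (Y t) $ i = h t / g t"
    proof (intro allI impI)
      fix t assume gt: "g t \<noteq> 0"
      have Vt: "V (X t) (Y t) \<in> carrier_vec ?n" "AM (X t) (Y t) *\<^sub>v V (X t) (Y t) = z" using V[OF nz] by auto
      define w where "w = V (X t) (Y t) @\<^sub>v 0\<^sub>v ?r"
      have w: "w \<in> carrier_vec ?m" using Vt dimF by (simp add: w_def)
      have "M t *\<^sub>v w = AM (X t) (Y t) *\<^sub>v V (X t) (Y t) + C0 *\<^sub>v 0\<^sub>v ?r"
        unfolding M_def w_def by (rule hcat_mult_vec[OF AM_carrier C0(1) Vt(1)]) simp
      also have "\<dots> = z" using Vt C0 z by simp
      finally have Mw: "M t *\<^sub>v w = z" .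
      have im: "i < ?m" using i dimF by simp
      have "h t = w $ i * g t" unfolding h_def g_def Mw[symmetric] by (rule cramer_lemma_mat[OF M w im])
      also have "w $ i = V (X t) (Y t) $ i" using i Vt by (simp add: w_def)
      finally show "V (X t) (Y t) $ i = h t / g t" using gt by simp
    qed
    then show "\<exists>g h. g holomorphic_on UNIV \<and> h holomorphic_on UNIV \<and> g t0 \<noteq> 0 \<and>
      (\<forall>t. g t \<noteq> 0 \<longrightarrow> V (X t) (Y t) $ i = h t / g t)" using g h g0 by blast
  qed
  have V0: "V 0 1 $ i = 0" if i: "i < ?n" for i
  proof -
    define K where "K = nat (F!j - E!i)"
    have K: "K > 0" using ltE[OF i] by (simp add: K_def)
    have pK: "x powi (F!j - E!i) = x ^ K" for x :: complex using ltE[OF i] by (simp add: K_def power_int_of_nat[symmetric])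
    have rel: "V x 1 $ i * x ^ K = V 1 (inverse x) $ i" if x: "x \<noteq> 0" for x
      using Vscale[OF x _ i, of 1 "inverse x"] x unfolding pK by simp
    have h1: "(\<lambda>x. V x 1 $ i) holomorphic_on UNIV" using Vholo[of "\<lambda>t. t" "\<lambda>t. 1" i] i by simp
    have h2: "(\<lambda>t. V 1 t $ i) holomorphic_on UNIV" using Vholo[of "\<lambda>t. 1" "\<lambda>t. t" i] i by simp
    show ?thesis by (rule liou[OF h1 holo_cont0[OF h2] K rel])
  qed
  have V01: "V 0 1 \<in> carrier_vec ?n" "AM 0 1 *\<^sub>v V 0 1 = z" using V[of 0 1] by auto
  have "V 0 1 = 0\<^sub>v ?n" using V0 V01(1) by (intro eq_vecI) auto
  then have "z = 0\<^sub>v ?m" using V01 mult_zero_vec[OF AM_carrier] by simp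
  then have "z $ j = 0" using j by simp
  then show False using j by (simp add: z_def)
qed


theorem min_bound:
  assumes j: "j < length F"
  shows "\<exists>l \<in> set E \<union> set G. l \<le> F!j"
proof (rule ccontr)
  assume "\<not> ?thesis"
  then have lt: "\<And>l. l \<in> set E \<union> set G \<Longrightarrow> F!j < l" by (meson not_le)
  have ltE: "i < length E \<Longrightarrow> F!j < E!i" for i using lt nth_mem by blast
  have ltG: "k < length G \<Longrightarrow> F!j < G!k" for k using lt nth_mem by blast
  let ?n = "length E" and ?m = "length F" and ?r = "length G"
  define z :: "complex vec" where "z = unit_vec ?m j"
  have z: "z \<in> carrier_vec ?m" by (simp add: z_def)
  have zA: "z \<bullet> (AM x y *\<^sub>v a) = 0" if a: "a \<in> carrier_vec ?n" for x y a
  proof -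
    have "z \<bullet> (AM x y *\<^sub>v a) = (AM x y *\<^sub>v a) $ j" unfolding z_def
      by (rule scalar_prod_left_unit[OF mult_mat_vec_carrier[OF AM_carrier a] j])
    also have "\<dots> = (\<Sum>i=0..<?n. AM x y $$ (j,i) * a $ i)" by (rule mv_sum[OF AM_carrier a j])
    also have "\<dots> = 0" by (rule sum.neutral) (use j ltE in \<open>simp add: AM_def AMat_index hpoly_neg\<close>)
    finally show ?thesis .
  qed
  define U where "U x y = (SOME u. u \<in> carrier_vec ?r \<and> (BM x y)\<^sup>T *\<^sub>v u = z)" for x y
  have U: "U x y \<in> carrier_vec ?r \<and> (BM x y)\<^sup>T *\<^sub>v U x y = z" if p: "(x,y) \<noteq> (0,0)" for x y
  proof -
    obtain u where "u \<in> carrier_vec ?r" "(BM x y)\<^sup>T *\<^sub>v u = z"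
      using xt.u_exists[OF xtp[OF p] z zA] by blast
    then have "u \<in> carrier_vec ?r \<and> (BM x y)\<^sup>T *\<^sub>v u = z" by blast
    then show ?thesis unfolding U_def by (rule someI)
  qed
  have BT: "(BM x y)\<^sup>T \<in> carrier_mat ?m ?r" for x y by simp
  have BTi: "(BM x y)\<^sup>T $$ (a,k) = BM x y $$ (k,a)" if "a < ?m" "k < ?r" for x y a k
    using that by simp
  have Uscale: "U (l*x) (l*y) $ k * l powi (G!k - F!j) = U x y $ k"
    if l: "l \<noteq> 0" and p: "(x,y) \<noteq> (0,0)" and k: "k < ?r" for l x y k
  proof -
    have lp: "(l*x, l*y) \<noteq> (0,0)" using l p by auto
    define u' where "u' = vec ?r (\<lambda>k. l powi (G!k) * U (l*x) (l*y) $ k)"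
    have u': "u' \<in> carrier_vec ?r" by (simp add: u'_def)
    have Up: "U x y \<in> carrier_vec ?r" "(BM x y)\<^sup>T *\<^sub>v U x y = z" using U[OF p] by auto
    have Ulp: "U (l*x) (l*y) \<in> carrier_vec ?r" "(BM (l*x) (l*y))\<^sup>T *\<^sub>v U (l*x) (l*y) = z" using U[OF lp] by auto
    have "(BM x y)\<^sup>T *\<^sub>v u' = (BM x y)\<^sup>T *\<^sub>v (l powi (F!j) \<cdot>\<^sub>v U x y)"
    proof (rule eq_vecI)
      fix a assume "a < dim_vec ((BM x y)\<^sup>T *\<^sub>v (l powi (F!j) \<cdot>\<^sub>v U x y))"
      then have a: "a < ?m" by simp
      have "z $ a = ((BM (l*x) (l*y))\<^sup>T *\<^sub>v U (l*x) (l*y)) $ a" using Ulp by simp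
      also have "\<dots> = (\<Sum>k=0..<?r. (BM (l*x) (l*y))\<^sup>T $$ (a,k) * U (l*x) (l*y) $ k)"
        by (rule mv_sum[OF BT Ulp(1) a])
      also have "\<dots> = (\<Sum>k=0..<?r. l powi (-(F!a)) * ((BM x y)\<^sup>T $$ (a,k) * u' $ k))"
      proof (rule sum.cong[OF refl])
        fix k assume "k \<in> {0..<?r}"
        then have k: "k < ?r" by simp
        show "(BM (l*x) (l*y))\<^sup>T $$ (a,k) * U (l*x) (l*y) $ k = l powi (-(F!a)) * ((BM x y)\<^sup>T $$ (a,k) * u' $ k)"
          unfolding BTi[where x="l*x" and y="l*y", OF a k] BTi[where x=x and y=y, OF a k]
          unfolding BM_def AMat_scale[OF l k a]
          using k by (simp add: u'_def mult_ac)
      qed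
      also have "\<dots> = l powi (-(F!a)) * ((BM x y)\<^sup>T *\<^sub>v u') $ a"
        by (simp add: sum_distrib_left mv_sum[OF BT u' a])
      finally have za: "z $ a = l powi (-(F!a)) * ((BM x y)\<^sup>T *\<^sub>v u') $ a" .
      have "((BM x y)\<^sup>T *\<^sub>v u') $ a = l powi (F!a) * z $ a"
        unfolding za mult.assoc[symmetric] powi_cancel[OF l, of "-(F!a)", simplified] by simp
      also have "\<dots> = l powi (F!j) * z $ a" using a j by (cases "a = j") (auto simp: z_def)
      also have "\<dots> = ((BM x y)\<^sup>T *\<^sub>v (l powi (F!j) \<cdot>\<^sub>v U x y)) $ a"
        using Up a z by (simp add: mult_mat_vec[OF BT Up(1)])
      finally show "((BM x y)\<^sup>T *\<^sub>v u') $ a = ((BM x y)\<^sup>T *\<^sub>v (l powi (F!j) \<cdot>\<^sub>v U x y)) $ a" .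
    qed simp
    from xt.u_unique[OF xtp[OF p] u' _ this] Up(1)
    have "u' = l powi (F!j) \<cdot>\<^sub>v U x y" by simp
    then have "u' $ k = l powi (F!j) * U x y $ k" using k Up(1) by simp
    then have e: "l powi (G!k) * U (l*x) (l*y) $ k = l powi (F!j) * U x y $ k" using k by (simp add: u'_def)
    have "U (l*x) (l*y) $ k * l powi (G!k - F!j) = l powi (-(F!j)) * (l powi (G!k) * U (l*x) (l*y) $ k)"
      using l by (simp add: power_int_diff power_int_minus field_simps)
    also have "\<dots> = U x y $ k" unfolding e mult.assoc[symmetric] using powi_cancel[OF l, of "F!j"]
      by simp
    finally show ?thesis .
  qed
  have Uholo: "(\<lambda>t. U (X t) (Y t) $ k) holomorphic_on UNIV"
    if X: "X holomorphic_on UNIV" and Y: "Y holomorphic_on UNIV" and nz: "\<And>t. (X t, Y t) \<noteq> (0,0)"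
      and k: "k < ?r" for X Y k
  proof (rule holo_quot)
    fix t0
    define C0 where "C0 = Cp (X t0) (Y t0)"
    have C0: "C0 \<in> carrier_mat ?m ?r" "BM (X t0) (Y t0) * C0 = 1\<^sub>m ?r"
      using Cp[OF nz] by (auto simp: C0_def)
    define N where "N t = (BM (X t) (Y t) * C0)\<^sup>T" for t
    have BC: "BM (X t) (Y t) * C0 \<in> carrier_mat ?r ?r" for t by (rule mult_carrier_mat[OF BM_carrier C0(1)])
    have N: "N t \<in> carrier_mat ?r ?r" for t unfolding N_def using BC[of t] by simp
    define b where "b = C0\<^sup>T *\<^sub>v z"
    define g where "g t = det (BM (X t) (Y t) * C0)" for t
    define h where "h t = det (replace_col (N t) b k)" for t
    have g: "g holomorphic_on UNIV" unfolding g_def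
    proof (rule det_holo[of _ ?r])
      show "\<And>t. BM (X t) (Y t) * C0 \<in> carrier_mat ?r ?r" by (rule BC)
      fix a c assume "a < ?r" "c < ?r"
      then show "(\<lambda>t. (BM (X t) (Y t) * C0) $$ (a,c)) holomorphic_on UNIV"
        unfolding BM_def by (intro AMat_mult_holo[OF X Y C0(1)])
    qed
    have h: "h holomorphic_on UNIV" unfolding h_def
    proof (rule det_holo[of _ ?r])
      show "\<And>t. replace_col (N t) b k \<in> carrier_mat ?r ?r" by (rule replace_col_carrier[OF N])
      fix a c assume ac: "a < ?r" "c < ?r"
      have "(\<lambda>t. replace_col (N t) b k $$ (a,c)) = (\<lambda>t. if c = k then b $ a else (BM (X t) (Y t) * C0) $$ (c,a))"
        by (rule ext) (simp only: replace_col_index[OF N ac], use ac C0 in \<open>simp add: N_def\<close>)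
      moreover have "(\<lambda>t. (BM (X t) (Y t) * C0) $$ (c,a)) holomorphic_on UNIV"
        unfolding BM_def using ac by (intro AMat_mult_holo[OF X Y C0(1)])
      ultimately show "(\<lambda>t. replace_col (N t) b k $$ (a,c)) holomorphic_on UNIV" by (cases "c = k") simp_all
    qed
    have g0: "g t0 \<noteq> 0" unfolding g_def C0(2) by simp
    have "\<forall>t. g t \<noteq> 0 \<longrightarrow> U (X t) (Y t) $ k = h t / g t"
    proof (intro allI impI)
      fix t assume gt: "g t \<noteq> 0"
      have Ut: "U (X t) (Y t) \<in> carrier_vec ?r" "(BM (X t) (Y t))\<^sup>T *\<^sub>v U (X t) (Y t) = z" using U[OF nz] by auto
      have "N t *\<^sub>v U (X t) (Y t) = (C0\<^sup>T * (BM (X t) (Y t))\<^sup>T) *\<^sub>v U (X t) (Y t)"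
        unfolding N_def by (simp add: transpose_mult[OF BM_carrier C0(1)])
      also have "\<dots> = C0\<^sup>T *\<^sub>v ((BM (X t) (Y t))\<^sup>T *\<^sub>v U (X t) (Y t))"
        by (rule assoc_mult_mat_vec[of _ ?r ?m]) (use C0 Ut in auto)
      also have "\<dots> = b" unfolding Ut(2) b_def ..
      finally have Nu: "N t *\<^sub>v U (X t) (Y t) = b" .
      have "h t = U (X t) (Y t) $ k * det (N t)" unfolding h_def Nu[symmetric]
        by (rule cramer_lemma_mat[OF N Ut(1) k])
      also have "det (N t) = g t" unfolding N_def g_def by (rule Determinant.det_transpose[OF BC])
      finally show "U (X t) (Y t) $ k = h t / g t" using gt by simp
    qed
    then show "\<exists>g h. g holomorphic_on UNIV \<and> h holomorphic_on UNIV \<and> g t0 \<noteq> 0 \<and>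
      (\<forall>t. g t \<noteq> 0 \<longrightarrow> U (X t) (Y t) $ k = h t / g t)" using g h g0 by blast
  qed
  have U0: "U 0 1 $ k = 0" if k: "k < ?r" for k
  proof -
    define K where "K = nat (G!k - F!j)"
    have K: "K > 0" using ltG[OF k] by (simp add: K_def)
    have pK: "x powi (G!k - F!j) = x ^ K" for x :: complex using ltG[OF k] by (simp add: K_def power_int_of_nat[symmetric])
    have rel: "U x 1 $ k * x ^ K = U 1 (inverse x) $ k" if x: "x \<noteq> 0" for x
      using Uscale[OF x _ k, of 1 "inverse x"] x unfolding pK by simp
    have h1: "(\<lambda>x. U x 1 $ k) holomorphic_on UNIV" using Uholo[of "\<lambda>t. t" "\<lambda>t. 1" k] k by simp
    have h2: "(\<lambda>t. U 1 t $ k) holomorphic_on UNIV" using Uholo[of "\<lambda>t. 1" "\<lambda>t. t" k] k by simp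
    show ?thesis by (rule liou[OF h1 holo_cont0[OF h2] K rel])
  qed
  have U01: "U 0 1 \<in> carrier_vec ?r" "(BM 0 1)\<^sup>T *\<^sub>v U 0 1 = z" using U[of 0 1] by auto
  have "U 0 1 = 0\<^sub>v ?r" using U0 U01(1) by (intro eq_vecI) auto
  then have "z = 0\<^sub>v ?m" using U01 mult_zero_vec[OF BT] by simp
  then have "z $ j = 0" using j by simp
  then show False using j by (simp add: z_def)
qed

end


lemma list_bounds:
  fixes L :: "int list"
  assumes L: "L \<noteq> []"
  shows "sum_list L \<le> int (length L) * Max (set L)" "int (length L) * Min (set L) \<le> sum_list L"
    "(\<forall>x\<in>set L. x \<le> c) \<Longrightarrow> (\<exists>x\<in>set L. x < c) \<Longrightarrow> sum_list L < int (length L) * c"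
    "(\<forall>x\<in>set L. c \<le> x) \<Longrightarrow> (\<exists>x\<in>set L. c < x) \<Longrightarrow> int (length L) * c < sum_list L"
proof -
  have s: "sum_list L = (\<Sum>i=0..<length L. L!i)" by (rule sum_list_sum_nth)
  have mx: "L!i \<le> Max (set L)" if "i < length L" for i using that by (simp add: nth_mem)
  have mn: "Min (set L) \<le> L!i" if "i < length L" for i using that by (simp add: nth_mem)
  show "sum_list L \<le> int (length L) * Max (set L)" unfolding s
    using sum_mono[of "{0..<length L}" "\<lambda>i. L!i" "\<lambda>_. Max (set L)"] mx by simp
  show "int (length L) * Min (set L) \<le> sum_list L" unfolding s
    using sum_mono[of "{0..<length L}" "\<lambda>_. Min (set L)" "\<lambda>i. L!i"] mn by simp
  show "sum_list L < int (length L) * c" if h1: "\<forall>x\<in>set L. x \<le> c" and h2: "\<exists>x\<in>set L. x < c"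
  proof -
    obtain x where x: "x \<in> set L" "x < c" using h2 by blast
    then obtain i where i: "i < length L" "L!i = x" by (auto simp: in_set_conv_nth)
    have "(\<Sum>i=0..<length L. L!i) < (\<Sum>i=0..<length L. c)"
    proof (rule sum_strict_mono_ex1)
      show "\<forall>i\<in>{0..<length L}. L!i \<le> c" using h1 nth_mem by auto
      show "\<exists>i\<in>{0..<length L}. L!i < c" using i x by auto
    qed simp
    then show ?thesis unfolding s by simp
  qed
  show "int (length L) * c < sum_list L" if h1: "\<forall>x\<in>set L. c \<le> x" and h2: "\<exists>x\<in>set L. c < x"
  proof -
    obtain x where x: "x \<in> set L" "c < x" using h2 by blast
    then obtain i where i: "i < length L" "L!i = x" by (auto simp: in_set_conv_nth)
    have "(\<Sum>i=0..<length L. c) < (\<Sum>i=0..<length L. L!i)"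
    proof (rule sum_strict_mono_ex1)
      show "\<forall>i\<in>{0..<length L}. c \<le> L!i" using h1 nth_mem by auto
      show "\<exists>i\<in>{0..<length L}. c < L!i" using i x by auto
    qed simp
    then show ?thesis unfolding s by simp
  qed
qed

lemma spread:
  fixes E F G :: "int list"
  assumes Fn: "F \<noteq> []" and Gn: "G \<noteq> []" and En: "E \<noteq> []"
    and maxb: "\<And>f. f \<in> set F \<Longrightarrow> \<exists>l \<in> set E \<union> set G. f \<le> l"
    and minb: "\<And>f. f \<in> set F \<Longrightarrow> \<exists>l \<in> set E \<union> set G. l \<le> f"
    and lo: "Min (set G) \<le> Min (set E)" and hi: "Max (set E) \<le> Max (set G)"
    and Gbal: "balanced_by 2 G"
  shows "balanced_by 2 F"
proof -
  have "\<forall>f\<in>set F. f \<le> Max (set G)"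
  proof
    fix f assume "f \<in> set F"
    then obtain l where l: "l \<in> set E \<union> set G" "f \<le> l" using maxb by blast
    have "l \<le> Max (set G)" using l(1) hi En Gn by (auto intro: order_trans[OF Max_ge])
    then show "f \<le> Max (set G)" using l(2) by simp
  qed
  then have a: "Max (set F) \<le> Max (set G)" using Fn by simp
  have "\<forall>f\<in>set F. Min (set G) \<le> f"
  proof
    fix f assume "f \<in> set F"
    then obtain l where l: "l \<in> set E \<union> set G" "l \<le> f" using minb by blast
    have "Min (set G) \<le> l" using l(1) lo En Gn by (auto intro: order_trans[OF _ Min_le])
    then show "Min (set G) \<le> f" using l(2) by simp
  qed
  then have b: "Min (set G) \<le> Min (set F)" using Fn by simp
  show ?thesis using a b Gbal Gn unfolding balanced_by_def by simp
qed

lemma comb: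
  fixes E F G :: "int list"
  assumes En: "E \<noteq> []" and dimF: "length F = length E + length G"
    and deg: "sum_list F = sum_list E + sum_list G"
    and maxb: "\<And>f. f \<in> set F \<Longrightarrow> \<exists>l \<in> set E \<union> set G. f \<le> l"
    and minb: "\<And>f. f \<in> set F \<Longrightarrow> \<exists>l \<in> set E \<union> set G. l \<le> f"
    and Ebal: "balanced_by 1 E" and Gbal: "balanced_by 2 G"
  shows "(mu E \<le> mu F \<longrightarrow> balanced_by 2 F \<or> (\<forall>a\<in>set G. a \<ge> \<lfloor>mu E\<rfloor>))
       \<and> (mu F \<le> mu E \<longrightarrow> balanced_by 2 F \<or> (\<forall>a\<in>set G. a \<le> \<lceil>mu E\<rceil>))"
proof -
  define n where "n = length E"
  define r where "r = length G"
  define eMin where "eMin = Min (set E)"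
  define eMax where "eMax = Max (set E)"
  have n: "n > 0" using En by (simp add: n_def)
  have Fn: "F \<noteq> []" using dimF n by (auto simp: n_def)
  have "Max (set E) - Min (set E) \<le> 1" using Ebal En unfolding balanced_by_def by simp
  then have eb: "eMax \<le> eMin + 1" unfolding eMin_def eMax_def by linarith
  have eMin_in: "eMin \<in> set E" and eMax_in: "eMax \<in> set E" using En by (simp_all add: eMin_def eMax_def)
  have ub: "sum_list E < int n * (eMin + 1)"
  proof (rule list_bounds(3)[OF En, folded n_def])
    show "\<forall>x\<in>set E. x \<le> eMin + 1"
    proof
      fix x assume "x \<in> set E"
      then have "x \<le> eMax" by (simp add: eMax_def)
      with eb show "x \<le> eMin + 1" by simp
    qed
    show "\<exists>x\<in>set E. x < eMin + 1" using eMin_in by (intro bexI[of _ eMin]) auto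
  qed
  have lb: "int n * (eMax - 1) < sum_list E"
  proof (rule list_bounds(4)[OF En, folded n_def])
    show "\<forall>x\<in>set E. eMax - 1 \<le> x"
    proof
      fix x assume "x \<in> set E"
      then have "eMin \<le> x" by (simp add: eMin_def)
      with eb show "eMax - 1 \<le> x" by simp
    qed
    show "\<exists>x\<in>set E. eMax - 1 < x" using eMax_in by (intro bexI[of _ eMax]) auto
  qed
  have muE: "mu E = real_of_int (sum_list E) / real n" by (simp add: mu_def dg_def rk_def n_def)
  have muF: "mu F = real_of_int (sum_list E + sum_list G) / real (n + r)"
    by (simp add: mu_def dg_def rk_def n_def r_def dimF deg)
  have fl: "\<lfloor>mu E\<rfloor> \<le> eMin"
  proof -
    have "real_of_int (sum_list E) < real_of_int (int n * (eMin + 1))" using ub by (simp only: of_int_less_iff)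
    then have "real_of_int (sum_list E) < real n * real_of_int (eMin + 1)" by simp
    then have "mu E < real_of_int (eMin + 1)" unfolding muE using n
      by (simp add: divide_less_eq mult.commute)
    then show ?thesis by (simp add: floor_le_iff)
  qed
  have ce: "eMax \<le> \<lceil>mu E\<rceil>"
  proof -
    have "real_of_int (int n * (eMax - 1)) < real_of_int (sum_list E)" using lb by (simp only: of_int_less_iff)
    then have "real n * real_of_int (eMax - 1) < real_of_int (sum_list E)" by simp
    then have "real_of_int (eMax - 1) < mu E" unfolding muE using n
      by (simp add: less_divide_eq mult.commute)
    then show ?thesis by (simp add: le_ceiling_iff)
  qed
  show ?thesis
  proof (intro conjI impI)
    assume le: "mu E \<le> mu F"
    show "balanced_by 2 F \<or> (\<forall>a\<in>set G. a \<ge> \<lfloor>mu E\<rfloor>)"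
    proof (rule disjCI)
      assume "\<not> (\<forall>a\<in>set G. a \<ge> \<lfloor>mu E\<rfloor>)"
      then obtain a where a: "a \<in> set G" "a < \<lfloor>mu E\<rfloor>" by auto
      have Gn: "G \<noteq> []" using a by auto
      have r: "r > 0" using Gn by (simp add: r_def)
      have "real_of_int (sum_list E) * real (n + r) \<le> real_of_int (sum_list E + sum_list G) * real n"
        using le n unfolding muE muF by (simp add: field_simps)
      then have "sum_list E * int (n + r) \<le> (sum_list E + sum_list G) * int n"
        by (metis of_int_le_iff of_int_mult of_int_of_nat_eq)
      then have c1: "sum_list E * int r \<le> sum_list G * int n" by (simp add: algebra_simps)
      have c2: "sum_list G \<le> int r * Max (set G)" using list_bounds(1)[OF Gn] by (simp add: r_def)
      have "int n * (eMax - 1) * int r < sum_list E * int r" using lb r by simp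
      also have "\<dots> \<le> sum_list G * int n" by (rule c1)
      also have "\<dots> \<le> int r * Max (set G) * int n" using c2 n by simp
      finally have "int n * int r * (eMax - 1) < int n * int r * Max (set G)" by (simp add: mult_ac)
      then have "eMax - 1 < Max (set G)" using n r by (simp add: mult_less_cancel_left_pos)
      then have hi: "eMax \<le> Max (set G)" by simp
      have "Min (set G) \<le> a" using a(1) by simp
      then have lo: "Min (set G) \<le> eMin" using a(2) fl by simp
      show "balanced_by 2 F" by (rule spread[OF Fn Gn En maxb minb]) (use lo hi Gbal in \<open>simp_all add: eMin_def eMax_def\<close>)
    qed
  next
    assume le: "mu F \<le> mu E"
    show "balanced_by 2 F \<or> (\<forall>a\<in>set G. a \<le> \<lceil>mu E\<rceil>)"
    proof (rule disjCI)
      assume "\<not> (\<forall>a\<in>set G. a \<le> \<lceil>mu E\<rceil>)"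
      then obtain a where a: "a \<in> set G" "\<lceil>mu E\<rceil> < a" by auto
      have Gn: "G \<noteq> []" using a by auto
      have r: "r > 0" using Gn by (simp add: r_def)
      have "real_of_int (sum_list E + sum_list G) * real n \<le> real_of_int (sum_list E) * real (n + r)"
        using le n unfolding muE muF by (simp add: field_simps)
      then have "(sum_list E + sum_list G) * int n \<le> sum_list E * int (n + r)"
        by (metis of_int_le_iff of_int_mult of_int_of_nat_eq)
      then have c1: "sum_list G * int n \<le> sum_list E * int r" by (simp add: algebra_simps)
      have c2: "int r * Min (set G) \<le> sum_list G" using list_bounds(2)[OF Gn] by (simp add: r_def)
      have "int r * Min (set G) * int n \<le> sum_list G * int n" using c2 n by simp
      also have "\<dots> \<le> sum_list E * int r" by (rule c1)
      also have "\<dots> < int n * (eMin + 1) * int r" using ub r by simp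
      finally have "int n * int r * Min (set G) < int n * int r * (eMin + 1)" by (simp add: mult_ac)
      then have "Min (set G) < eMin + 1" using n r by (simp add: mult_less_cancel_left_pos)
      then have lo: "Min (set G) \<le> eMin" by simp
      have "a \<le> Max (set G)" using a(1) by simp
      then have hi: "eMax \<le> Max (set G)" using a(2) ce by simp
      show "balanced_by 2 F" by (rule spread[OF Fn Gn En maxb minb]) (use lo hi Gbal in \<open>simp_all add: eMin_def eMax_def\<close>)
    qed
  qed
qed

theorem lemma2p3:
  fixes E F G :: "int list"
    and alpha beta :: "nat \<Rightarrow> nat \<Rightarrow> nat \<Rightarrow> complex"
  assumes ex: "short_exact E F G alpha beta"
    and Epos: "E \<noteq> []"
    and Ebal: "balanced_by 1 E"
    and Gbal: "balanced_by 2 G"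
  shows "(mu E \<le> mu F \<longrightarrow> balanced_by 2 F \<or> (\<forall>a\<in>set G. a \<ge> \<lfloor>mu E\<rfloor>))
       \<and> (mu F \<le> mu E \<longrightarrow> balanced_by 2 F \<or> (\<forall>a\<in>set G. a \<le> \<lceil>mu E\<rceil>))"
proof -
  have S: "ses E F G alpha beta" by unfold_locales (rule ex)
  have maxb: "\<exists>l \<in> set E \<union> set G. f \<le> l" if fF: "f \<in> set F" for f
  proof -
    obtain j where "j < length F" "f = F!j" using fF by (auto simp: in_set_conv_nth)
    then show ?thesis using ses.max_bound[OF S] by blast
  qed
  have minb: "\<exists>l \<in> set E \<union> set G. l \<le> f" if fF: "f \<in> set F" for f
  proof -
    obtain j where "j < length F" "f = F!j" using fF by (auto simp: in_set_conv_nth)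
    then show ?thesis using ses.min_bound[OF S] by blast
  qed
  show ?thesis by (rule comb[OF Epos ses.dimF[OF S] ses.deg[OF S] maxb minb Ebal Gbal])
qed

end
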